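(* Let $\kappa: G\to[1,\infty)$. (1) $G$ has the $\mathcal{L}^2_\kappa$-decay property with respect to $\|\cdot\|_{2,\kappa}$ if and only if the linear map $f\mapsto\pi_\lambda(f)$ from $(\mathcal{K}(G),\|\cdot\|_{2,\kappa})$ to $(C^*_r(G),\|\cdot\|)$ is bounded. (2) If $G$ is $\kappa$-decaying, then $(G,\sigma)$ is $\kappa$-decaying for every normalized 2-cocycle $\sigma$, and $$\{x\in vN(G,\sigma)\mid \widehat x\in\mathcal{L}^2_\kappa\}=\tilde\pi_\sigma(\mathcal{L}^2_\kappa)\subseteq CF(G,\sigma),$$ where $\tilde\pi_\sigma(\xi)$ denotes the operator-norm sum of $\sum_{g\in G}\xi(g)\Lambda_\sigma(g)$.
   Context: $G$ is a discrete group with identity $e$, and $\sigma : G\times G \to \mathbb{T}$ is a normalized 2-cocycle ($\sigma(g,h)\sigma(gh,k)=\sigma(h,k)\sigma(g,hk)$, $\sigma(g,e)=\sigma(e,g)=1$). $\Lambda_\sigma(g)$ is the unitary on $\ell^2(G)$ given by $(\Lambda_\sigma(g)\xi)(h)=\sigma(g,g^{-1}h)\xi(g^{-1}h)$; $\lambda=\Lambda_1$. $C^*_r(G,\sigma)$ (resp. $vN(G,\sigma)$) is the operator-norm (resp. weak-operator) closed $*$-subalgebra of $B(\ell^2(G))$ generated by $\Lambda_\sigma(G)$; $C^*_r(G)=C^*_r(G,1)$. For $x\in vN(G,\sigma)$, $\widehat x=x\delta_e\in\ell^2(G)$; the Fourier series of $x$ is $\sum_g\widehat x(g)\Lambda_\sigma(g)$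 (series over $G$ converge as nets of finite partial sums); $CF(G,\sigma)$ is the set of $x\in C^*_r(G,\sigma)$ whose Fourier series converges in operator norm. $\mathcal{K}(G)$ = finitely supported functions, $\pi_\sigma(f)=\sum_g f(g)\Lambda_\sigma(g)$, $\pi_\lambda=\pi_1$. For $\kappa:G\to[1,\infty)$, $\mathcal{L}^2_\kappa=\{\xi:G\to\mathbb{C}\mid \xi\kappa\in\ell^2(G)\}$ with norm $\|\xi\|_{2,\kappa}=\|\xi\kappa\|_2$. For a subspace $\mathcal{L}\supseteq\mathcal{K}(G)$ of $\ell^2(G)$ with norm $\|\cdot\|'$, $(G,\sigma)$ has the $\mathcal{L}$-decay property w.r.t. $\|\cdot\|'$ if (i) for every $\xi\in\mathcal{L}$ and $\varepsilon>0$ there is a finite $F_0$ with $\|\xi\chi_F\|'<\varepsilon$ for all finite $F$ disjoint from $F_0$, and (ii) $f\mapsto\pi_\sigma(f)$ is bounded from $(\mathcal{K}(G),\|\cdot\|')$ to $C^*_r(G,\sigma)$. $(G,\sigma)$ is $\kappa$-decaying if it has the $\mathcal{L}^2_\kappa$-decay property w.r.t. $\|\cdot\|_{2,\kappa}$; $G$ is $\kappa$-decaying if $(G,1)$ is. *)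

theory Defs
  imports "HOL-Analysis.Analysis"
begin

text \<open>The discrete group G is modelled as a type of class group_add (not necessarily
commutative), written additively: identity 0, product g + h, inverse - g.
Vectors of l2(G) are functions G => complex; operators are functions on such functions,
normalised to vanish outside l2(G) so that bounded operators are determined uniquely.\<close>

definition ell2 :: "('g \<Rightarrow> complex) set" where
  "ell2 = {\<xi>. (\<lambda>g. (cmod (\<xi> g))^2) summable_on UNIV}"

definition l2norm :: "('g \<Rightarrow> complex) \<Rightarrow> real" where
  "l2norm \<xi> = sqrt (\<Sum>\<^sub>\<infinity>g. (cmod (\<xi> g))^2)"

definition l2inner :: "('g \<Rightarrow> complex) \<Rightarrow> ('g \<Rightarrow> complex) \<Rightarrow> complex" where
  "l2inner \<xi> \<eta> = (\<Sum>\<^sub>\<infinity>g. \<xi> g * cnj (\<eta> g))"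

type_synonym 'g op = "('g \<Rightarrow> complex) \<Rightarrow> ('g \<Rightarrow> complex)"

definition bdd_ops :: "'g op set" where
  "bdd_ops = {T. (\<forall>\<xi>\<in>ell2. T \<xi> \<in> ell2)
     \<and> (\<forall>\<xi>\<in>ell2. \<forall>\<eta>\<in>ell2. \<forall>a b. T (\<lambda>g. a * \<xi> g + b * \<eta> g) = (\<lambda>g. a * T \<xi> g + b * T \<eta> g))
     \<and> (\<exists>C. \<forall>\<xi>\<in>ell2. l2norm (T \<xi>) \<le> C * l2norm \<xi>)
     \<and> (\<forall>\<xi>. \<xi> \<notin> ell2 \<longrightarrow> T \<xi> = (\<lambda>_. 0))}"

definition opnorm :: "'g op \<Rightarrow> real" where
  "opnorm T = Sup ((\<lambda>\<xi>. l2norm (T \<xi>)) ` {\<xi>\<in>ell2. l2norm \<xi> \<le> 1})"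

definition op_add :: "'g op \<Rightarrow> 'g op \<Rightarrow> 'g op" where
  "op_add S T = (\<lambda>\<xi> g. S \<xi> g + T \<xi> g)"

definition op_minus :: "'g op \<Rightarrow> 'g op \<Rightarrow> 'g op" where
  "op_minus S T = (\<lambda>\<xi> g. S \<xi> g - T \<xi> g)"

definition op_smult :: "complex \<Rightarrow> 'g op \<Rightarrow> 'g op" where
  "op_smult c T = (\<lambda>\<xi> g. c * T \<xi> g)"

definition op_adj :: "'g op \<Rightarrow> 'g op" where
  "op_adj T = (THE S. S \<in> bdd_ops \<and> (\<forall>\<xi>\<in>ell2. \<forall>\<eta>\<in>ell2. l2inner (T \<xi>) \<eta> = l2inner \<xi> (S \<eta>)))"

definition star_subalg :: "'g op set \<Rightarrow> bool" where
  "star_subalg A \<longleftrightarrow> A \<subseteq> bdd_ops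
     \<and> (\<forall>S\<in>A. \<forall>T\<in>A. op_add S T \<in> A \<and> S \<circ> T \<in> A)
     \<and> (\<forall>c. \<forall>T\<in>A. op_smult c T \<in> A)
     \<and> (\<forall>T\<in>A. op_adj T \<in> A)"

definition norm_closed :: "'g op set \<Rightarrow> bool" where
  "norm_closed A \<longleftrightarrow> (\<forall>T\<in>bdd_ops. (\<forall>\<epsilon>>0. \<exists>S\<in>A. opnorm (op_minus T S) < \<epsilon>) \<longrightarrow> T \<in> A)"

definition wot_closed :: "'g op set \<Rightarrow> bool" where
  "wot_closed A \<longleftrightarrow> (\<forall>T\<in>bdd_ops.
      (\<forall>P \<epsilon>. finite P \<and> P \<subseteq> ell2 \<times> ell2 \<and> \<epsilon> > 0 \<longrightarrow>
          (\<exists>S\<in>A. \<forall>(\<xi>,\<eta>)\<in>P. cmod (l2inner (T \<xi>) \<eta> - l2inner (S \<xi>) \<eta>) < \<epsilon>))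
      \<longrightarrow> T \<in> A)"

definition cocycle :: "('g::group_add \<Rightarrow> 'g \<Rightarrow> complex) \<Rightarrow> bool" where
  "cocycle \<sigma> \<longleftrightarrow> (\<forall>g h. cmod (\<sigma> g h) = 1)
     \<and> (\<forall>g h k. \<sigma> g h * \<sigma> (g + h) k = \<sigma> h k * \<sigma> g (h + k))
     \<and> (\<forall>g. \<sigma> g 0 = 1 \<and> \<sigma> 0 g = 1)"

definition triv :: "'g \<Rightarrow> 'g \<Rightarrow> complex" where
  "triv = (\<lambda>_ _. 1)"

definition Lam :: "('g::group_add \<Rightarrow> 'g \<Rightarrow> complex) \<Rightarrow> 'g \<Rightarrow> 'g op" where
  "Lam \<sigma> g = (\<lambda>\<xi>. if \<xi> \<in> ell2 then (\<lambda>h. \<sigma> g (- g + h) * \<xi> (- g + h)) else (\<lambda>_. 0))"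

definition Cr :: "('g::group_add \<Rightarrow> 'g \<Rightarrow> complex) \<Rightarrow> 'g op set" where
  "Cr \<sigma> = \<Inter>{A. star_subalg A \<and> norm_closed A \<and> range (Lam \<sigma>) \<subseteq> A}"

definition vN :: "('g::group_add \<Rightarrow> 'g \<Rightarrow> complex) \<Rightarrow> 'g op set" where
  "vN \<sigma> = \<Inter>{A. star_subalg A \<and> wot_closed A \<and> range (Lam \<sigma>) \<subseteq> A}"

definition delta_e :: "'g::group_add \<Rightarrow> complex" where
  "delta_e = (\<lambda>h. if h = 0 then 1 else 0)"

definition hat :: "'g::group_add op \<Rightarrow> ('g \<Rightarrow> complex)" where
  "hat x = x delta_e"

definition psum :: "('g::group_add \<Rightarrow> 'g \<Rightarrow> complex) \<Rightarrow> ('g \<Rightarrow> complex) \<Rightarrow> 'g set \<Rightarrow> 'g op" where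
  "psum \<sigma> f F = (\<lambda>\<xi> h. \<Sum>g\<in>F. f g * Lam \<sigma> g \<xi> h)"

definition Kfin :: "('g \<Rightarrow> complex) set" where
  "Kfin = {f. finite {g. f g \<noteq> 0}}"

definition piS :: "('g::group_add \<Rightarrow> 'g \<Rightarrow> complex) \<Rightarrow> ('g \<Rightarrow> complex) \<Rightarrow> 'g op" where
  "piS \<sigma> f = psum \<sigma> f {g. f g \<noteq> 0}"

definition op_net_conv :: "('g set \<Rightarrow> 'g op) \<Rightarrow> 'g op \<Rightarrow> bool" where
  "op_net_conv P T \<longleftrightarrow> (\<forall>\<epsilon>>0. \<exists>F0. finite F0 \<and>
       (\<forall>F. finite F \<and> F0 \<subseteq> F \<longrightarrow> opnorm (op_minus (P F) T) < \<epsilon>))"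

definition CF :: "('g::group_add \<Rightarrow> 'g \<Rightarrow> complex) \<Rightarrow> 'g op set" where
  "CF \<sigma> = {x \<in> Cr \<sigma>. \<exists>T\<in>bdd_ops. op_net_conv (psum \<sigma> (hat x)) T}"

definition tpi :: "('g::group_add \<Rightarrow> 'g \<Rightarrow> complex) \<Rightarrow> ('g \<Rightarrow> complex) \<Rightarrow> 'g op" where
  "tpi \<sigma> \<xi> = (THE T. T \<in> bdd_ops \<and> op_net_conv (psum \<sigma> \<xi>) T)"

definition L2k :: "('g \<Rightarrow> real) \<Rightarrow> ('g \<Rightarrow> complex) set" where
  "L2k \<kappa> = {\<xi>. (\<lambda>g. \<xi> g * complex_of_real (\<kappa> g)) \<in> ell2}"

definition norm2k :: "('g \<Rightarrow> real) \<Rightarrow> ('g \<Rightarrow> complex) \<Rightarrow> real" where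
  "norm2k \<kappa> \<xi> = l2norm (\<lambda>g. \<xi> g * complex_of_real (\<kappa> g))"

definition chiF :: "'g set \<Rightarrow> ('g \<Rightarrow> complex) \<Rightarrow> ('g \<Rightarrow> complex)" where
  "chiF F \<xi> = (\<lambda>g. if g \<in> F then \<xi> g else 0)"

definition pi_bounded :: "('g::group_add \<Rightarrow> 'g \<Rightarrow> complex) \<Rightarrow> (('g \<Rightarrow> complex) \<Rightarrow> real) \<Rightarrow> bool" where
  "pi_bounded \<sigma> nrm \<longleftrightarrow> (\<exists>C. \<forall>f\<in>Kfin. opnorm (piS \<sigma> f) \<le> C * nrm f)"

definition decay_prop :: "('g::group_add \<Rightarrow> 'g \<Rightarrow> complex) \<Rightarrow> ('g \<Rightarrow> complex) set \<Rightarrow> (('g \<Rightarrow> complex) \<Rightarrow> real) \<Rightarrow> bool" where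
  "decay_prop \<sigma> L nrm \<longleftrightarrow>
     (\<forall>\<xi>\<in>L. \<forall>\<epsilon>>0. \<exists>F0. finite F0 \<and> (\<forall>F. finite F \<and> F \<inter> F0 = {} \<longrightarrow> nrm (chiF F \<xi>) < \<epsilon>))
     \<and> pi_bounded \<sigma> nrm"

definition kappa_decaying :: "('g::group_add \<Rightarrow> 'g \<Rightarrow> complex) \<Rightarrow> ('g \<Rightarrow> real) \<Rightarrow> bool" where
  "kappa_decaying \<sigma> \<kappa> \<longleftrightarrow> decay_prop \<sigma> (L2k \<kappa>) (norm2k \<kappa>)"

end

theory Submission
  imports Defs
begin


lemma ell2_iff_bdd:
  "\<xi> \<in> ell2 \<longleftrightarrow> (\<exists>B. \<forall>H. finite H \<longrightarrow> (\<Sum>g\<in>H. (cmod (\<xi> g))^2) \<le> B)"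
proof
  assume "\<xi> \<in> ell2"
  then have s: "(\<lambda>g. (cmod (\<xi> g))^2) summable_on UNIV" by (simp add: ell2_def)
  show "\<exists>B. \<forall>H. finite H \<longrightarrow> (\<Sum>g\<in>H. (cmod (\<xi> g))^2) \<le> B"
    by (rule exI[of _ "\<Sum>\<^sub>\<infinity>g. (cmod (\<xi> g))^2"]) (auto intro!: finite_sum_le_infsum[OF s])
next
  assume "\<exists>B. \<forall>H. finite H \<longrightarrow> (\<Sum>g\<in>H. (cmod (\<xi> g))^2) \<le> B"
  then obtain B where B: "\<And>H. finite H \<Longrightarrow> (\<Sum>g\<in>H. (cmod (\<xi> g))^2) \<le> B" by blast
  have "(\<lambda>g. (cmod (\<xi> g))^2) summable_on UNIV"
    by (rule nonneg_bdd_above_summable_on) (auto intro!: bdd_aboveI[where M=B] B)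
  then show "\<xi> \<in> ell2" by (simp add: ell2_def)
qed

lemma l2norm_nonneg[simp]: "l2norm \<xi> \<ge> 0"
  unfolding l2norm_def by (intro real_sqrt_ge_zero infsum_nonneg) simp

lemma l2norm_sq: "\<xi> \<in> ell2 \<Longrightarrow> (l2norm \<xi>)^2 = (\<Sum>\<^sub>\<infinity>g. (cmod (\<xi> g))^2)"
  unfolding l2norm_def by (subst real_sqrt_pow2) (auto intro!: infsum_nonneg)

lemma sum_le_l2norm_sq:
  assumes "\<xi> \<in> ell2" "finite H"
  shows "(\<Sum>g\<in>H. (cmod (\<xi> g))^2) \<le> (l2norm \<xi>)^2"
  using assms by (auto simp: l2norm_sq ell2_def intro!: finite_sum_le_infsum)

lemma l2_bound:
  assumes "B \<ge> 0" "\<And>H. finite H \<Longrightarrow> (\<Sum>g\<in>H. (cmod (\<xi> g))^2) \<le> B^2"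
  shows "\<xi> \<in> ell2 \<and> l2norm \<xi> \<le> B"
proof -
  have e: "\<xi> \<in> ell2" using assms(2) ell2_iff_bdd by blast
  then have s: "(\<lambda>g. (cmod (\<xi> g))^2) summable_on UNIV" by (simp add: ell2_def)
  have "(\<Sum>\<^sub>\<infinity>g. (cmod (\<xi> g))^2) \<le> B^2"
    by (rule infsum_le_finite_sums[OF s]) (use assms in auto)
  then have "l2norm \<xi> \<le> sqrt (B^2)" unfolding l2norm_def by (rule real_sqrt_le_mono)
  with assms(1) show ?thesis using e by simp
qed

lemma L2_set_le_l2norm:
  assumes "\<xi> \<in> ell2" "finite H"
  shows "L2_set (\<lambda>g. cmod (\<xi> g)) H \<le> l2norm \<xi>"
proof -
  have "L2_set (\<lambda>g. cmod (\<xi> g)) H = sqrt (\<Sum>g\<in>H. (cmod (\<xi> g))^2)" by (simp add: L2_set_def)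
  also have "\<dots> \<le> sqrt ((l2norm \<xi>)^2)" using sum_le_l2norm_sq[OF assms] real_sqrt_le_mono by blast
  finally show ?thesis by simp
qed

lemma l2_combo:
  assumes "\<xi> \<in> ell2" "\<eta> \<in> ell2" "a \<ge> 0" "b \<ge> 0"
    and "\<And>g. cmod (\<zeta> g) \<le> a * cmod (\<xi> g) + b * cmod (\<eta> g)"
  shows "\<zeta> \<in> ell2 \<and> l2norm \<zeta> \<le> a * l2norm \<xi> + b * l2norm \<eta>"
proof (rule l2_bound)
  show "0 \<le> a * l2norm \<xi> + b * l2norm \<eta>" using assms by simp
  fix H :: "'a set" assume H: "finite H"
  have "L2_set (\<lambda>g. cmod (\<zeta> g)) H \<le> L2_set (\<lambda>g. a * cmod (\<xi> g) + b * cmod (\<eta> g)) H"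
    by (rule L2_set_mono) (use assms in auto)
  also have "\<dots> \<le> L2_set (\<lambda>g. a * cmod (\<xi> g)) H + L2_set (\<lambda>g. b * cmod (\<eta> g)) H"
    by (rule L2_set_triangle_ineq)
  also have "\<dots> = a * L2_set (\<lambda>g. cmod (\<xi> g)) H + b * L2_set (\<lambda>g. cmod (\<eta> g)) H"
    using assms by (simp add: L2_set_right_distrib)
  also have "\<dots> \<le> a * l2norm \<xi> + b * l2norm \<eta>"
    using assms H by (intro add_mono mult_left_mono L2_set_le_l2norm) auto
  finally have *: "L2_set (\<lambda>g. cmod (\<zeta> g)) H \<le> a * l2norm \<xi> + b * l2norm \<eta>" .
  have "(\<Sum>g\<in>H. (cmod (\<zeta> g))^2) = (L2_set (\<lambda>g. cmod (\<zeta> g)) H)^2"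
    by (simp add: L2_set_def sum_nonneg)
  also have "\<dots> \<le> (a * l2norm \<xi> + b * l2norm \<eta>)^2"
    using * by (intro power_mono) auto
  finally show "(\<Sum>g\<in>H. (cmod (\<zeta> g))^2) \<le> (a * l2norm \<xi> + b * l2norm \<eta>)^2" .
qed

lemma l2_dom:
  assumes "\<xi> \<in> ell2" "a \<ge> 0" "\<And>g. cmod (\<zeta> g) \<le> a * cmod (\<xi> g)"
  shows "\<zeta> \<in> ell2 \<and> l2norm \<zeta> \<le> a * l2norm \<xi>"
  using l2_combo[OF assms(1) assms(1) assms(2), of 0 \<zeta>] assms by simp

lemma zero_ell2[simp]: "(\<lambda>_. 0) \<in> ell2"
  by (simp add: ell2_def)

lemma l2norm_zero_fun[simp]: "l2norm (\<lambda>_. 0) = 0"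
  by (simp add: l2norm_def)

lemma l2norm_eq0:
  assumes "\<xi> \<in> ell2" "l2norm \<xi> = 0"
  shows "\<xi> = (\<lambda>_. 0)"
proof
  fix g
  have "(\<Sum>h\<in>{g}. (cmod (\<xi> h))^2) \<le> (l2norm \<xi>)^2" by (rule sum_le_l2norm_sq) (use assms in auto)
  then show "\<xi> g = 0" using assms by simp
qed

lemma l2norm_le0:
  assumes "\<xi> \<in> ell2" "l2norm \<xi> \<le> 0"
  shows "\<xi> = (\<lambda>_. 0)"
  using l2norm_eq0[OF assms(1)] assms(2) l2norm_nonneg[of \<xi>] by linarith

lemma ell2_lin:
  assumes "\<xi> \<in> ell2" "\<eta> \<in> ell2"
  shows "(\<lambda>g. a * \<xi> g + b * \<eta> g) \<in> ell2"
  using l2_combo[OF assms, of "cmod a" "cmod b" "\<lambda>g. a * \<xi> g + b * \<eta> g"]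
  by (simp add: norm_mult[symmetric] norm_triangle_ineq)

lemma ell2_add: "\<xi> \<in> ell2 \<Longrightarrow> \<eta> \<in> ell2 \<Longrightarrow> (\<lambda>g. \<xi> g + \<eta> g) \<in> ell2"
  using ell2_lin[of \<xi> \<eta> 1 1] by simp

lemma ell2_diff: "\<xi> \<in> ell2 \<Longrightarrow> \<eta> \<in> ell2 \<Longrightarrow> (\<lambda>g. \<xi> g - \<eta> g) \<in> ell2"
  using ell2_lin[of \<xi> \<eta> 1 "-1"] by simp

lemma ell2_scale: "\<xi> \<in> ell2 \<Longrightarrow> (\<lambda>g. a * \<xi> g) \<in> ell2"
  using ell2_lin[of \<xi> \<xi> a 0] by simp

lemma l2norm_add: "\<xi> \<in> ell2 \<Longrightarrow> \<eta> \<in> ell2 \<Longrightarrow> l2norm (\<lambda>g. \<xi> g + \<eta> g) \<le> l2norm \<xi> + l2norm \<eta>"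
  using l2_combo[of \<xi> \<eta> 1 1 "\<lambda>g. \<xi> g + \<eta> g"] by (simp add: norm_triangle_ineq)

lemma l2norm_diff: "\<xi> \<in> ell2 \<Longrightarrow> \<eta> \<in> ell2 \<Longrightarrow> l2norm (\<lambda>g. \<xi> g - \<eta> g) \<le> l2norm \<xi> + l2norm \<eta>"
  using l2_combo[of \<xi> \<eta> 1 1 "\<lambda>g. \<xi> g - \<eta> g"] by (simp add: norm_triangle_ineq4)

lemma l2norm_scale_le: "\<xi> \<in> ell2 \<Longrightarrow> l2norm (\<lambda>g. a * \<xi> g) \<le> cmod a * l2norm \<xi>"
  using l2_dom[of \<xi> "cmod a" "\<lambda>g. a * \<xi> g"] by (simp add: norm_mult)

lemma l2norm_diff_sym: "l2norm (\<lambda>g. \<xi> g - \<eta> g) = l2norm (\<lambda>g. \<eta> g - \<xi> g)"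
  unfolding l2norm_def by (simp add: norm_minus_commute)

lemma ell2_cmod: "\<xi> \<in> ell2 \<Longrightarrow> (\<lambda>g. complex_of_real (cmod (\<xi> g))) \<in> ell2 \<and> l2norm (\<lambda>g. complex_of_real (cmod (\<xi> g))) = l2norm \<xi>"
  by (simp add: ell2_def l2norm_def)

definition dlt :: "'g \<Rightarrow> 'g \<Rightarrow> complex" where
  "dlt j = (\<lambda>h. if h = j then 1 else 0)"

lemma dlt_ell2[simp]: "dlt j \<in> ell2"
proof -
  have "((\<lambda>g. (cmod (dlt j g))^2) has_sum 1) UNIV"
    by (rule has_sum_finite_neutralI[of "{j}"]) (auto simp: dlt_def)
  then show ?thesis by (auto simp: ell2_def summable_on_def)
qed

lemma l2norm_dlt[simp]: "l2norm (dlt j) = 1"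
proof -
  have "((\<lambda>g. (cmod (dlt j g))^2) has_sum 1) UNIV"
    by (rule has_sum_finite_neutralI[of "{j}"]) (auto simp: dlt_def)
  then show ?thesis by (simp add: l2norm_def infsumI)
qed

lemma ell2_tail:
  assumes "\<xi> \<in> ell2" "\<epsilon> > 0"
  shows "\<exists>F0. finite F0 \<and> (\<forall>H. finite H \<and> H \<inter> F0 = {} \<longrightarrow> (\<Sum>g\<in>H. (cmod (\<xi> g))^2) < \<epsilon>)"
proof -
  define f where "f g = (cmod (\<xi> g))^2" for g
  have s: "f summable_on UNIV" using assms by (simp add: ell2_def f_def[abs_def])
  define S where "S = infsum f UNIV"
  have nn: "\<And>x. f x \<ge> 0" by (simp add: f_def)
  have bdd: "bdd_above (sum f ` {F. finite F \<and> F \<subseteq> UNIV})"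
    by (rule bdd_aboveI[where M=S]) (auto simp: S_def intro!: finite_sum_le_infsum[OF s] nn)
  have "S = (SUP F\<in>{F. finite F \<and> F \<subseteq> UNIV}. sum f F)"
    unfolding S_def by (rule infsum_nonneg_is_SUPREMUM_real[OF s]) (simp add: f_def)
  moreover have "S - \<epsilon> < S" using assms by simp
  ultimately have "\<exists>F\<in>{F. finite F \<and> F \<subseteq> UNIV}. S - \<epsilon> < sum f F"
    using less_cSUP_iff[of "{F. finite F \<and> F \<subseteq> UNIV}" "sum f" "S - \<epsilon>"] bdd by auto
  then obtain F0 where F0: "finite F0" "S - \<epsilon> < sum f F0" by auto
  have "\<forall>H. finite H \<and> H \<inter> F0 = {} \<longrightarrow> sum f H < \<epsilon>"
  proof (intro allI impI)
    fix H assume H: "finite H \<and> H \<inter> F0 = {}"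
    have "sum f H + sum f F0 = sum f (H \<union> F0)" using H F0 by (simp add: sum.union_disjoint)
    also have "\<dots> \<le> S" unfolding S_def using H F0 by (auto intro!: finite_sum_le_infsum[OF s] nn)
    finally show "sum f H < \<epsilon>" using F0 by simp
  qed
  then show ?thesis using F0 by (auto simp: f_def)
qed

definition trunc :: "'g set \<Rightarrow> ('g \<Rightarrow> complex) \<Rightarrow> ('g \<Rightarrow> complex)" where
  "trunc F \<xi> = (\<lambda>g. if g \<in> F then \<xi> g else 0)"

lemma trunc_approx:
  assumes "\<xi> \<in> ell2" "\<epsilon> > 0"
  shows "\<exists>F0. finite F0 \<and> (\<forall>F. F0 \<subseteq> F \<longrightarrow> l2norm (\<lambda>g. \<xi> g - trunc F \<xi> g) \<le> \<epsilon>)"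
proof -
  obtain F0 where F0: "finite F0" "\<And>H. finite H \<Longrightarrow> H \<inter> F0 = {} \<Longrightarrow> (\<Sum>g\<in>H. (cmod (\<xi> g))^2) < \<epsilon>^2"
    using ell2_tail[OF assms(1), of "\<epsilon>^2"] assms by auto
  have "l2norm (\<lambda>g. \<xi> g - trunc F \<xi> g) \<le> \<epsilon>" if "F0 \<subseteq> F" for F
  proof -
    have "(\<lambda>g. \<xi> g - trunc F \<xi> g) \<in> ell2 \<and> l2norm (\<lambda>g. \<xi> g - trunc F \<xi> g) \<le> \<epsilon>"
    proof (rule l2_bound)
      show "0 \<le> \<epsilon>" using assms by simp
      fix H :: "'a set" assume H: "finite H"
      have "(\<Sum>g\<in>H. (cmod (\<xi> g - trunc F \<xi> g))^2) = (\<Sum>g\<in>H - F. (cmod (\<xi> g))^2)"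
        using H by (intro sum.mono_neutral_cong_right) (auto simp: trunc_def)
      also have "\<dots> < \<epsilon>^2" using H that by (intro F0) auto
      finally show "(\<Sum>g\<in>H. (cmod (\<xi> g - trunc F \<xi> g))^2) \<le> \<epsilon>^2" by simp
    qed
    then show ?thesis by blast
  qed
  then show ?thesis using F0 by blast
qed

lemma trunc_ell2: "\<xi> \<in> ell2 \<Longrightarrow> trunc F \<xi> \<in> ell2"
  using l2_dom[of \<xi> 1 "trunc F \<xi>"] by (auto simp: trunc_def)

lemma trunc_finite_sum: "finite F \<Longrightarrow> trunc F \<xi> = (\<lambda>h. \<Sum>g\<in>F. \<xi> g * dlt g h)"
  by (auto simp: trunc_def dlt_def fun_eq_iff if_distrib cong: if_cong)

lemma l2inner_abs:
  assumes "\<xi> \<in> ell2" "\<eta> \<in> ell2"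
  shows "(\<lambda>g. cmod (\<xi> g * cnj (\<eta> g))) summable_on UNIV
    \<and> (\<Sum>\<^sub>\<infinity>g. cmod (\<xi> g * cnj (\<eta> g))) \<le> l2norm \<xi> * l2norm \<eta>"
proof -
  have fin: "(\<Sum>g\<in>H. cmod (\<xi> g * cnj (\<eta> g))) \<le> l2norm \<xi> * l2norm \<eta>" if "finite H" for H
  proof -
    have "(\<Sum>g\<in>H. cmod (\<xi> g * cnj (\<eta> g))) = (\<Sum>g\<in>H. \<bar>cmod (\<xi> g)\<bar> * \<bar>cmod (\<eta> g)\<bar>)"
      by (simp add: norm_mult)
    also have "\<dots> \<le> L2_set (\<lambda>g. cmod (\<xi> g)) H * L2_set (\<lambda>g. cmod (\<eta> g)) H"
      by (rule L2_set_mult_ineq)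
    also have "\<dots> \<le> l2norm \<xi> * l2norm \<eta>"
      using assms that by (intro mult_mono L2_set_le_l2norm) auto
    finally show ?thesis .
  qed
  have s: "(\<lambda>g. cmod (\<xi> g * cnj (\<eta> g))) summable_on UNIV"
    by (rule nonneg_bdd_above_summable_on) (auto intro!: bdd_aboveI[where M="l2norm \<xi> * l2norm \<eta>"] fin)
  have "(\<Sum>\<^sub>\<infinity>g. cmod (\<xi> g * cnj (\<eta> g))) \<le> l2norm \<xi> * l2norm \<eta>"
    by (rule infsum_le_finite_sums[OF s]) (use fin in auto)
  with s show ?thesis by blast
qed

lemma l2inner_summable:
  "\<xi> \<in> ell2 \<Longrightarrow> \<eta> \<in> ell2 \<Longrightarrow> (\<lambda>g. \<xi> g * cnj (\<eta> g)) summable_on UNIV"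
  by (rule abs_summable_summable) (use l2inner_abs[of \<xi> \<eta>] in auto)

lemma l2inner_bound:
  assumes "\<xi> \<in> ell2" "\<eta> \<in> ell2"
  shows "cmod (l2inner \<xi> \<eta>) \<le> l2norm \<xi> * l2norm \<eta>"
proof -
  have "cmod (l2inner \<xi> \<eta>) \<le> (\<Sum>\<^sub>\<infinity>g. cmod (\<xi> g * cnj (\<eta> g)))"
    unfolding l2inner_def using l2inner_abs[OF assms] by (intro norm_infsum_bound) auto
  then show ?thesis using l2inner_abs[OF assms] by linarith
qed

lemma l2inner_lin1:
  assumes "\<xi> \<in> ell2" "\<eta> \<in> ell2" "\<zeta> \<in> ell2"
  shows "l2inner (\<lambda>g. a * \<xi> g + b * \<eta> g) \<zeta> = a * l2inner \<xi> \<zeta> + b * l2inner \<eta> \<zeta>"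
proof -
  have s1: "(\<lambda>g. a * (\<xi> g * cnj (\<zeta> g))) summable_on UNIV"
    using l2inner_summable[OF assms(1,3)] by (rule summable_on_cmult_right)
  have s2: "(\<lambda>g. b * (\<eta> g * cnj (\<zeta> g))) summable_on UNIV"
    using l2inner_summable[OF assms(2,3)] by (rule summable_on_cmult_right)
  have "l2inner (\<lambda>g. a * \<xi> g + b * \<eta> g) \<zeta> = (\<Sum>\<^sub>\<infinity>g. a * (\<xi> g * cnj (\<zeta> g)) + b * (\<eta> g * cnj (\<zeta> g)))"
    unfolding l2inner_def by (simp add: algebra_simps)
  also have "\<dots> = (\<Sum>\<^sub>\<infinity>g. a * (\<xi> g * cnj (\<zeta> g))) + (\<Sum>\<^sub>\<infinity>g. b * (\<eta> g * cnj (\<zeta> g)))"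
    by (rule infsum_add[OF s1 s2])
  also have "\<dots> = a * l2inner \<xi> \<zeta> + b * l2inner \<eta> \<zeta>"
    unfolding l2inner_def by (simp add: infsum_cmult_right')
  finally show ?thesis .
qed

lemma l2inner_cnj: "l2inner \<eta> \<xi> = cnj (l2inner \<xi> \<eta>)"
  unfolding l2inner_def by (simp flip: infsum_cnj add: mult.commute)

lemma l2inner_lin2:
  assumes "\<xi> \<in> ell2" "\<eta> \<in> ell2" "\<zeta> \<in> ell2"
  shows "l2inner \<zeta> (\<lambda>g. a * \<xi> g + b * \<eta> g) = cnj a * l2inner \<zeta> \<xi> + cnj b * l2inner \<zeta> \<eta>"
  using l2inner_lin1[OF assms, of a b] by (subst (1 2 3) l2inner_cnj) simp

lemma l2inner_diff1:
  assumes "\<xi> \<in> ell2" "\<eta> \<in> ell2" "\<zeta> \<in> ell2"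
  shows "l2inner (\<lambda>g. \<xi> g - \<eta> g) \<zeta> = l2inner \<xi> \<zeta> - l2inner \<eta> \<zeta>"
  using l2inner_lin1[OF assms, of 1 "-1"] by simp

lemma l2inner_dlt_right[simp]: "l2inner \<xi> (dlt j) = \<xi> j"
proof -
  have "((\<lambda>g. \<xi> g * cnj (dlt j g)) has_sum \<xi> j) UNIV"
    by (rule has_sum_finite_neutralI[of "{j}"]) (auto simp: dlt_def)
  then show ?thesis by (simp add: l2inner_def infsumI)
qed

lemma l2inner_dlt_left[simp]: "l2inner (dlt j) \<xi> = cnj (\<xi> j)"
  by (subst l2inner_cnj) simp

lemma ell2_eq_by_dlt: "(\<And>j. l2inner \<xi> (dlt j) = l2inner \<eta> (dlt j)) \<Longrightarrow> \<xi> = \<eta>"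
  by (auto simp: fun_eq_iff)



lemma bo_ell2: "T \<in> bdd_ops \<Longrightarrow> \<xi> \<in> ell2 \<Longrightarrow> T \<xi> \<in> ell2"
  by (simp add: bdd_ops_def)

lemma bo_lin: "T \<in> bdd_ops \<Longrightarrow> \<xi> \<in> ell2 \<Longrightarrow> \<eta> \<in> ell2 \<Longrightarrow>
   T (\<lambda>g. a * \<xi> g + b * \<eta> g) = (\<lambda>g. a * T \<xi> g + b * T \<eta> g)"
  by (simp add: bdd_ops_def)

lemma bo_out: "T \<in> bdd_ops \<Longrightarrow> \<xi> \<notin> ell2 \<Longrightarrow> T \<xi> = (\<lambda>_. 0)"
  by (simp add: bdd_ops_def)

lemma bo_zero: "T \<in> bdd_ops \<Longrightarrow> T (\<lambda>_. 0) = (\<lambda>_. 0)"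
  using bo_lin[of T "\<lambda>_. 0" "\<lambda>_. 0" 0 0] by simp

lemma bo_scale: "T \<in> bdd_ops \<Longrightarrow> \<xi> \<in> ell2 \<Longrightarrow> T (\<lambda>g. a * \<xi> g) = (\<lambda>g. a * T \<xi> g)"
  using bo_lin[of T \<xi> \<xi> a 0] by simp

lemma bo_add: "T \<in> bdd_ops \<Longrightarrow> \<xi> \<in> ell2 \<Longrightarrow> \<eta> \<in> ell2 \<Longrightarrow> T (\<lambda>g. \<xi> g + \<eta> g) = (\<lambda>g. T \<xi> g + T \<eta> g)"
  using bo_lin[of T \<xi> \<eta> 1 1] by simp

lemma bo_diff: "T \<in> bdd_ops \<Longrightarrow> \<xi> \<in> ell2 \<Longrightarrow> \<eta> \<in> ell2 \<Longrightarrow> T (\<lambda>g. \<xi> g - \<eta> g) = (\<lambda>g. T \<xi> g - T \<eta> g)"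
  using bo_lin[of T \<xi> \<eta> 1 "-1"] by simp

lemma bo_bdd: "T \<in> bdd_ops \<Longrightarrow> \<exists>C\<ge>0. \<forall>\<xi>\<in>ell2. l2norm (T \<xi>) \<le> C * l2norm \<xi>"
proof -
  assume T: "T \<in> bdd_ops"
  then obtain C where C: "\<forall>\<xi>\<in>ell2. l2norm (T \<xi>) \<le> C * l2norm \<xi>" by (auto simp: bdd_ops_def)
  have "\<forall>\<xi>\<in>ell2. l2norm (T \<xi>) \<le> max C 0 * l2norm \<xi>"
  proof
    fix \<xi> :: "'a \<Rightarrow> complex" assume "\<xi> \<in> ell2"
    then have "l2norm (T \<xi>) \<le> C * l2norm \<xi>" using C by blast
    also have "\<dots> \<le> max C 0 * l2norm \<xi>" by (intro mult_right_mono) auto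
    finally show "l2norm (T \<xi>) \<le> max C 0 * l2norm \<xi>" .
  qed
  then show ?thesis by (intro exI[of _ "max C 0"]) auto
qed

lemma opnorm_bdd_above:
  assumes "T \<in> bdd_ops"
  shows "bdd_above ((\<lambda>\<xi>. l2norm (T \<xi>)) ` {\<xi>\<in>ell2. l2norm \<xi> \<le> 1})"
proof -
  obtain C where C: "C \<ge> 0" "\<forall>\<xi>\<in>ell2. l2norm (T \<xi>) \<le> C * l2norm \<xi>" using bo_bdd[OF assms] by blast
  show ?thesis
  proof (rule bdd_aboveI[where M=C])
    fix x assume "x \<in> (\<lambda>\<xi>. l2norm (T \<xi>)) ` {\<xi>\<in>ell2. l2norm \<xi> \<le> 1}"
    then obtain \<xi> where "\<xi> \<in> ell2" "l2norm \<xi> \<le> 1" "x = l2norm (T \<xi>)" by auto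
    moreover have "C * l2norm \<xi> \<le> C" using C(1) \<open>l2norm \<xi> \<le> 1\<close> by (simp add: mult_left_le)
    ultimately show "x \<le> C" using C(2) by force
  qed
qed

lemma opnorm_upper:
  assumes "T \<in> bdd_ops" "\<xi> \<in> ell2" "l2norm \<xi> \<le> 1"
  shows "l2norm (T \<xi>) \<le> opnorm T"
  unfolding opnorm_def using assms opnorm_bdd_above[OF assms(1)] by (intro cSup_upper) auto

lemma opnorm_nonneg: "T \<in> bdd_ops \<Longrightarrow> opnorm T \<ge> 0"
  using opnorm_upper[of T "\<lambda>_. 0"] l2norm_nonneg[of "T (\<lambda>_. 0)"] by (metis order_trans l2norm_zero_fun order_refl zero_ell2 le_numeral_extra(1))

lemma opnorm_bound:
  assumes T: "T \<in> bdd_ops" and x: "\<xi> \<in> ell2"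
  shows "l2norm (T \<xi>) \<le> opnorm T * l2norm \<xi>"
proof (cases "l2norm \<xi> = 0")
  case True
  then have "\<xi> = (\<lambda>_. 0)" using l2norm_eq0 x by blast
  then show ?thesis using bo_zero[OF T] by simp
next
  case False
  define r where "r = l2norm \<xi>"
  have r: "r > 0" using False by (simp add: r_def order_le_neq_trans)
  define \<zeta> where "\<zeta> = (\<lambda>g. complex_of_real (1 / r) * \<xi> g)"
  have z: "\<zeta> \<in> ell2" unfolding \<zeta>_def by (rule ell2_scale[OF x])
  have "l2norm \<zeta> \<le> cmod (complex_of_real (1 / r)) * l2norm \<xi>"
    unfolding \<zeta>_def by (rule l2norm_scale_le[OF x])
  also have "\<dots> = 1" using r by (simp add: r_def norm_divide)
  finally have z1: "l2norm \<zeta> \<le> 1" .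
  have xe: "\<xi> = (\<lambda>g. complex_of_real r * \<zeta> g)" using r by (auto simp: \<zeta>_def fun_eq_iff)
  have "T \<xi> = (\<lambda>g. complex_of_real r * T \<zeta> g)" unfolding xe by (rule bo_scale[OF T z])
  then have "l2norm (T \<xi>) \<le> cmod (complex_of_real r) * l2norm (T \<zeta>)"
    using l2norm_scale_le[OF bo_ell2[OF T z], of "complex_of_real r"] by simp
  also have "\<dots> \<le> r * opnorm T" using r opnorm_upper[OF T z z1] by simp
  finally show ?thesis by (simp add: r_def mult.commute)
qed

lemma opnorm_le:
  assumes "B \<ge> 0" "\<And>\<xi>. \<xi> \<in> ell2 \<Longrightarrow> l2norm (T \<xi>) \<le> B * l2norm \<xi>"
  shows "opnorm T \<le> B"
  unfolding opnorm_def
proof (rule cSup_least)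
  show "(\<lambda>\<xi>. l2norm (T \<xi>)) ` {\<xi> \<in> ell2. l2norm \<xi> \<le> 1} \<noteq> {}"
    by (auto intro!: exI[of _ "\<lambda>_. 0"])
  fix x assume "x \<in> (\<lambda>\<xi>. l2norm (T \<xi>)) ` {\<xi> \<in> ell2. l2norm \<xi> \<le> 1}"
  then obtain \<xi> where "\<xi> \<in> ell2" "l2norm \<xi> \<le> 1" "x = l2norm (T \<xi>)" by auto
  moreover have "B * l2norm \<xi> \<le> B" using assms(1) \<open>l2norm \<xi> \<le> 1\<close> by (simp add: mult_left_le)
  ultimately show "x \<le> B" using assms(2) by force
qed

lemma opnorm_minus_sym: "opnorm (op_minus S T) = opnorm (op_minus T S)"
  unfolding opnorm_def op_minus_def by (subst l2norm_diff_sym) simp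

lemma bdd_opsI:
  assumes "\<And>\<xi>. \<xi> \<in> ell2 \<Longrightarrow> T \<xi> \<in> ell2"
    and "\<And>\<xi> \<eta> a b. \<xi> \<in> ell2 \<Longrightarrow> \<eta> \<in> ell2 \<Longrightarrow> T (\<lambda>g. a * \<xi> g + b * \<eta> g) = (\<lambda>g. a * T \<xi> g + b * T \<eta> g)"
    and "\<And>\<xi>. \<xi> \<in> ell2 \<Longrightarrow> l2norm (T \<xi>) \<le> C * l2norm \<xi>"
    and "\<And>\<xi>. \<xi> \<notin> ell2 \<Longrightarrow> T \<xi> = (\<lambda>_. 0)"
  shows "T \<in> bdd_ops"
  unfolding bdd_ops_def using assms by blast

lemma zero_op_bo: "(\<lambda>\<xi> h. 0) \<in> bdd_ops"
  by (rule bdd_opsI[where C=0]) auto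

lemma op_add_bo: assumes S: "S \<in> bdd_ops" and T: "T \<in> bdd_ops" shows "op_add S T \<in> bdd_ops"
proof -
  obtain C1 where C1: "\<forall>\<xi>\<in>ell2. l2norm (S \<xi>) \<le> C1 * l2norm \<xi>" using bo_bdd[OF S] by blast
  obtain C2 where C2: "\<forall>\<xi>\<in>ell2. l2norm (T \<xi>) \<le> C2 * l2norm \<xi>" using bo_bdd[OF T] by blast
  show ?thesis unfolding op_add_def
  proof (rule bdd_opsI[where C="C1 + C2"])
    fix \<xi> :: "'a \<Rightarrow> complex" assume x: "\<xi> \<in> ell2"
    show "(\<lambda>g. S \<xi> g + T \<xi> g) \<in> ell2" using ell2_add[OF bo_ell2[OF S x] bo_ell2[OF T x]] .
    have "l2norm (\<lambda>g. S \<xi> g + T \<xi> g) \<le> l2norm (S \<xi>) + l2norm (T \<xi>)"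
      using l2norm_add[OF bo_ell2[OF S x] bo_ell2[OF T x]] .
    also have "\<dots> \<le> (C1 + C2) * l2norm \<xi>" using C1 C2 x by (simp add: distrib_right add_mono)
    finally show "l2norm (\<lambda>g. S \<xi> g + T \<xi> g) \<le> (C1 + C2) * l2norm \<xi>" .
  next
    fix \<xi> \<eta> :: "'a \<Rightarrow> complex" and a b assume "\<xi> \<in> ell2" "\<eta> \<in> ell2"
    then show "(\<lambda>g. S (\<lambda>g. a * \<xi> g + b * \<eta> g) g + T (\<lambda>g. a * \<xi> g + b * \<eta> g) g) =
        (\<lambda>g. a * (S \<xi> g + T \<xi> g) + b * (S \<eta> g + T \<eta> g))"
      using S T by (simp add: bo_lin[OF S] bo_lin[OF T] algebra_simps)
  qed (use bo_out[OF S] bo_out[OF T] in auto)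
qed

lemma op_smult_bo: assumes T: "T \<in> bdd_ops" shows "op_smult c T \<in> bdd_ops"
proof -
  obtain C where C: "\<forall>\<xi>\<in>ell2. l2norm (T \<xi>) \<le> C * l2norm \<xi>" "C \<ge> 0" using bo_bdd[OF T] by blast
  show ?thesis unfolding op_smult_def
  proof (rule bdd_opsI[where C="cmod c * C"])
    fix \<xi> :: "'a \<Rightarrow> complex" assume x: "\<xi> \<in> ell2"
    show "(\<lambda>g. c * T \<xi> g) \<in> ell2" using ell2_scale[OF bo_ell2[OF T x]] .
    have "l2norm (\<lambda>g. c * T \<xi> g) \<le> cmod c * l2norm (T \<xi>)" using l2norm_scale_le[OF bo_ell2[OF T x]] .
    also have "\<dots> \<le> cmod c * (C * l2norm \<xi>)" using C x by (intro mult_left_mono) auto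
    finally show "l2norm (\<lambda>g. c * T \<xi> g) \<le> cmod c * C * l2norm \<xi>" by (simp add: mult.assoc)
  next
    fix \<xi> \<eta> :: "'a \<Rightarrow> complex" and a b assume "\<xi> \<in> ell2" "\<eta> \<in> ell2"
    then show "(\<lambda>g. c * T (\<lambda>g. a * \<xi> g + b * \<eta> g) g) = (\<lambda>g. a * (c * T \<xi> g) + b * (c * T \<eta> g))"
      using T by (simp add: bo_lin[OF T] algebra_simps)
  qed (use bo_out[OF T] in auto)
qed

lemma op_minus_bo: assumes S: "S \<in> bdd_ops" and T: "T \<in> bdd_ops" shows "op_minus S T \<in> bdd_ops"
proof -
  have "op_minus S T = op_add S (op_smult (-1) T)"
    by (simp add: op_minus_def op_add_def op_smult_def fun_eq_iff)
  then show ?thesis using op_add_bo[OF S op_smult_bo[OF T]] by simp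
qed

lemma comp_bo: assumes S: "S \<in> bdd_ops" and T: "T \<in> bdd_ops" shows "S \<circ> T \<in> bdd_ops"
proof -
  obtain C1 where C1: "\<forall>\<xi>\<in>ell2. l2norm (S \<xi>) \<le> C1 * l2norm \<xi>" "C1 \<ge> 0" using bo_bdd[OF S] by blast
  obtain C2 where C2: "\<forall>\<xi>\<in>ell2. l2norm (T \<xi>) \<le> C2 * l2norm \<xi>" "C2 \<ge> 0" using bo_bdd[OF T] by blast
  show ?thesis
  proof (rule bdd_opsI[where C="C1 * C2"])
    fix \<xi> :: "'a \<Rightarrow> complex" assume x: "\<xi> \<in> ell2"
    show "(S \<circ> T) \<xi> \<in> ell2" using x S T by (simp add: bo_ell2)
    have "l2norm ((S \<circ> T) \<xi>) \<le> C1 * l2norm (T \<xi>)" using C1 bo_ell2[OF T x] by simp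
    also have "\<dots> \<le> C1 * (C2 * l2norm \<xi>)" using C1 C2 x by (intro mult_left_mono) auto
    finally show "l2norm ((S \<circ> T) \<xi>) \<le> C1 * C2 * l2norm \<xi>" by (simp add: mult.assoc)
  next
    fix \<xi> \<eta> :: "'a \<Rightarrow> complex" and a b assume "\<xi> \<in> ell2" "\<eta> \<in> ell2"
    then show "(S \<circ> T) (\<lambda>g. a * \<xi> g + b * \<eta> g) = (\<lambda>g. a * (S \<circ> T) \<xi> g + b * (S \<circ> T) \<eta> g)"
      using S T by (simp add: bo_lin[OF S] bo_lin[OF T] bo_ell2[OF T])
  next
    fix \<xi> :: "'a \<Rightarrow> complex" assume "\<xi> \<notin> ell2"
    then show "(S \<circ> T) \<xi> = (\<lambda>_. 0)" using S T by (simp add: bo_out[OF T] bo_zero[OF S])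
  qed
qed

lemma sum_bo:
  assumes "finite F" "\<And>g. g \<in> F \<Longrightarrow> A g \<in> bdd_ops"
  shows "(\<lambda>\<xi> h. \<Sum>g\<in>F. c g * A g \<xi> h) \<in> bdd_ops"
  using assms
proof (induction F rule: finite_induct)
  case empty
  then show ?case using zero_op_bo by simp
next
  case (insert x F)
  have "(\<lambda>\<xi> h. \<Sum>g\<in>insert x F. c g * A g \<xi> h) = op_add (op_smult (c x) (A x)) (\<lambda>\<xi> h. \<Sum>g\<in>F. c g * A g \<xi> h)"
    using insert by (simp add: op_add_def op_smult_def fun_eq_iff)
  then show ?case using insert by (simp add: op_add_bo op_smult_bo)
qed

lemma cmod_eq_ell2:
  assumes "\<And>h. cmod (\<xi> h) = cmod (\<eta> h)"
  shows "(\<xi> \<in> ell2 \<longleftrightarrow> \<eta> \<in> ell2) \<and> l2norm \<xi> = l2norm \<eta>"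
  using assms by (simp add: ell2_def l2norm_def)

lemma reindex_ell2:
  fixes p q :: "'a \<Rightarrow> 'a"
  assumes "\<And>x. p (q x) = x" "\<And>x. q (p x) = x"
  shows "((\<lambda>h. \<xi> (p h)) \<in> ell2 \<longleftrightarrow> \<xi> \<in> ell2) \<and> l2norm (\<lambda>h. \<xi> (p h)) = l2norm \<xi>"
proof -
  have "(\<lambda>h. (cmod (\<xi> (p h)))^2) summable_on UNIV \<longleftrightarrow> (\<lambda>h. (cmod (\<xi> h))^2) summable_on UNIV"
    by (rule summable_on_reindex_bij_witness[of UNIV q p]) (use assms in auto)
  moreover have "(\<Sum>\<^sub>\<infinity>h. (cmod (\<xi> (p h)))^2) = (\<Sum>\<^sub>\<infinity>h. (cmod (\<xi> h))^2)"
    by (rule infsum_reindex_bij_witness[of UNIV q p]) (use assms in auto)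
  ultimately show ?thesis by (simp add: ell2_def l2norm_def)
qed

lemma reindex_l2inner:
  fixes p q :: "'a \<Rightarrow> 'a"
  assumes "\<And>x. p (q x) = x" "\<And>x. q (p x) = x"
  shows "l2inner (\<lambda>h. \<xi> (p h)) \<eta> = l2inner \<xi> (\<lambda>h. \<eta> (q h))"
  unfolding l2inner_def
  by (rule infsum_reindex_bij_witness[of UNIV q p]) (use assms in auto)



lemma neg_add_eq0_iff: "(- g + h = (0::'g::group_add)) \<longleftrightarrow> g = h"
proof
  assume a: "- g + h = 0"
  have "h = g + (- g + h)" by (simp add: add.assoc[symmetric])
  with a show "g = h" by simp
qed simp

lemma Lam_in: "\<xi> \<in> ell2 \<Longrightarrow> Lam \<sigma> g \<xi> = (\<lambda>h. \<sigma> g (- g + h) * \<xi> (- g + h))"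
  by (simp add: Lam_def)

lemma shift_ell2:
  fixes \<xi> :: "'g::group_add \<Rightarrow> complex"
  shows "((\<lambda>h. \<xi> (- g + h)) \<in> ell2 \<longleftrightarrow> \<xi> \<in> ell2) \<and> l2norm (\<lambda>h. \<xi> (- g + h)) = l2norm \<xi>"
  by (rule reindex_ell2[of _ "\<lambda>x. g + x"]) (simp_all add: add.assoc[symmetric])

lemma Lam_bo:
  assumes "cocycle \<sigma>"
  shows "Lam \<sigma> g \<in> bdd_ops"
proof (rule bdd_opsI[where C=1])
  have m: "\<And>a b. cmod (\<sigma> a b) = 1" using assms by (simp add: cocycle_def)
  have n: "((\<lambda>h. \<sigma> g (- g + h) * \<xi> (- g + h)) \<in> ell2 \<longleftrightarrow> \<xi> \<in> ell2)
     \<and> l2norm (\<lambda>h. \<sigma> g (- g + h) * \<xi> (- g + h)) = l2norm \<xi>" for \<xi>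
  proof -
    have "((\<lambda>h. \<sigma> g (- g + h) * \<xi> (- g + h)) \<in> ell2 \<longleftrightarrow> (\<lambda>h. \<xi> (- g + h)) \<in> ell2)
     \<and> l2norm (\<lambda>h. \<sigma> g (- g + h) * \<xi> (- g + h)) = l2norm (\<lambda>h. \<xi> (- g + h))"
      by (rule cmod_eq_ell2) (simp add: norm_mult m)
    then show ?thesis using shift_ell2[of \<xi> g] by simp
  qed
  fix \<xi> :: "'a \<Rightarrow> complex"
  show "\<xi> \<in> ell2 \<Longrightarrow> Lam \<sigma> g \<xi> \<in> ell2" using n by (simp add: Lam_in)
  show "\<xi> \<in> ell2 \<Longrightarrow> l2norm (Lam \<sigma> g \<xi>) \<le> 1 * l2norm \<xi>" using n by (simp add: Lam_in)
  show "\<xi> \<notin> ell2 \<Longrightarrow> Lam \<sigma> g \<xi> = (\<lambda>_. 0)" by (simp add: Lam_def)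
next
  fix \<xi> \<eta> :: "'a \<Rightarrow> complex" and a b assume "\<xi> \<in> ell2" "\<eta> \<in> ell2"
  then show "Lam \<sigma> g (\<lambda>g. a * \<xi> g + b * \<eta> g) = (\<lambda>h. a * Lam \<sigma> g \<xi> h + b * Lam \<sigma> g \<eta> h)"
  proof -
    have "(\<lambda>g. a * \<xi> g + b * \<eta> g) \<in> ell2" using ell2_lin[OF \<open>\<xi> \<in> ell2\<close> \<open>\<eta> \<in> ell2\<close>] .
    then show ?thesis using \<open>\<xi> \<in> ell2\<close> \<open>\<eta> \<in> ell2\<close> by (simp add: Lam_in distrib_left mult.left_commute)
  qed
qed

lemma triv_cocycle: "cocycle triv"
  by (simp add: cocycle_def triv_def)

lemma psum_bo: "cocycle \<sigma> \<Longrightarrow> finite F \<Longrightarrow> psum \<sigma> f F \<in> bdd_ops"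
  unfolding psum_def by (rule sum_bo) (auto intro: Lam_bo)

lemma Kfin_finite: "f \<in> Kfin \<Longrightarrow> finite {g. f g \<noteq> 0}"
  by (simp add: Kfin_def)

lemma piS_bo: "cocycle \<sigma> \<Longrightarrow> f \<in> Kfin \<Longrightarrow> piS \<sigma> f \<in> bdd_ops"
  unfolding piS_def by (rule psum_bo) (auto simp: Kfin_def)

lemma psum_chiF: assumes "finite D" shows "psum \<sigma> \<xi> D = piS \<sigma> (chiF D \<xi>)"
proof -
  have e: "{g. chiF D \<xi> g \<noteq> 0} = {g\<in>D. \<xi> g \<noteq> 0}" by (auto simp: chiF_def)
  show ?thesis unfolding piS_def psum_def e
    by (intro ext sum.mono_neutral_cong_right) (use assms in \<open>auto simp: chiF_def\<close>)
qed

lemma chiF_Kfin: "finite D \<Longrightarrow> chiF D \<xi> \<in> Kfin"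
  unfolding Kfin_def chiF_def by (auto intro: finite_subset[of _ D])

lemma psum_split: "finite F' \<Longrightarrow> F \<subseteq> F' \<Longrightarrow> psum \<sigma> \<xi> F' \<eta> h = psum \<sigma> \<xi> F \<eta> h + psum \<sigma> \<xi> (F' - F) \<eta> h"
  unfolding psum_def by (subst sum.subset_diff[of F F']) (auto simp: add.commute)

text \<open>Decay condition (i) holds automatically.\<close>
lemma L2k_ell2: "\<forall>g. \<kappa> g \<ge> 1 \<Longrightarrow> \<xi> \<in> L2k \<kappa> \<Longrightarrow> \<xi> \<in> ell2"
proof -
  assume k: "\<forall>g. \<kappa> g \<ge> 1" and x: "\<xi> \<in> L2k \<kappa>"
  have "cmod (\<xi> g) \<le> 1 * cmod (\<xi> g * complex_of_real (\<kappa> g))" for g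
  proof -
    have "cmod (\<xi> g) * 1 \<le> cmod (\<xi> g) * \<bar>\<kappa> g\<bar>" using k by (intro mult_left_mono) (auto, smt (verit) k)
    then show ?thesis by (simp add: norm_mult)
  qed
  then show ?thesis using l2_dom[of "\<lambda>g. \<xi> g * complex_of_real (\<kappa> g)" 1 \<xi>] x by (auto simp: L2k_def)
qed

lemma decay_i:
  assumes "\<xi> \<in> L2k \<kappa>" "\<epsilon> > 0"
  shows "\<exists>F0. finite F0 \<and> (\<forall>F. finite F \<and> F \<inter> F0 = {} \<longrightarrow> norm2k \<kappa> (chiF F \<xi>) < \<epsilon>)"
proof -
  define \<eta> where "\<eta> = (\<lambda>g. \<xi> g * complex_of_real (\<kappa> g))"
  have e: "\<eta> \<in> ell2" using assms by (simp add: L2k_def \<eta>_def)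
  obtain F0 where F0: "finite F0" "\<And>H. finite H \<Longrightarrow> H \<inter> F0 = {} \<Longrightarrow> (\<Sum>g\<in>H. (cmod (\<eta> g))^2) < (\<epsilon>/2)^2"
    using ell2_tail[OF e, of "(\<epsilon>/2)^2"] assms by auto
  have "norm2k \<kappa> (chiF F \<xi>) < \<epsilon>" if F: "finite F" "F \<inter> F0 = {}" for F
  proof -
    have "(\<lambda>g. chiF F \<xi> g * complex_of_real (\<kappa> g)) \<in> ell2 \<and> l2norm (\<lambda>g. chiF F \<xi> g * complex_of_real (\<kappa> g)) \<le> \<epsilon>/2"
    proof (rule l2_bound)
      show "0 \<le> \<epsilon>/2" using assms by simp
      fix H :: "'a set" assume H: "finite H"
      have "(\<Sum>g\<in>H. (cmod (chiF F \<xi> g * complex_of_real (\<kappa> g)))^2) = (\<Sum>g\<in>H \<inter> F. (cmod (\<eta> g))^2)"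
        using H by (intro sum.mono_neutral_cong_right) (auto simp: chiF_def \<eta>_def)
      also have "\<dots> < (\<epsilon>/2)^2" using H F by (intro F0) auto
      finally show "(\<Sum>g\<in>H. (cmod (chiF F \<xi> g * complex_of_real (\<kappa> g)))^2) \<le> (\<epsilon>/2)^2" by simp
    qed
    then show ?thesis using assms by (simp add: norm2k_def)
  qed
  then show ?thesis using F0 by blast
qed

lemma pi_bounded_transfer:
  assumes s: "cocycle \<sigma>" and pb: "pi_bounded triv (norm2k \<kappa>)"
  shows "pi_bounded \<sigma> (norm2k \<kappa>)"
proof -
  obtain C where C: "\<And>f. f \<in> Kfin \<Longrightarrow> opnorm (piS triv f) \<le> C * norm2k \<kappa> f"
    using pb by (auto simp: pi_bounded_def)
  have m: "\<And>a b. cmod (\<sigma> a b) = 1" using s by (simp add: cocycle_def)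
  have "opnorm (piS \<sigma> f) \<le> C * norm2k \<kappa> f" if f: "f \<in> Kfin" for f
  proof -
    define af where "af = (\<lambda>g. complex_of_real (cmod (f g)))"
    have supp: "{g. af g \<noteq> 0} = {g. f g \<noteq> 0}" by (auto simp: af_def)
    have afK: "af \<in> Kfin" using f supp by (simp add: Kfin_def)
    have nk: "norm2k \<kappa> af = norm2k \<kappa> f"
      unfolding norm2k_def by (rule conjunct2[OF cmod_eq_ell2]) (simp add: af_def norm_mult)
    have bo: "piS triv af \<in> bdd_ops" by (rule piS_bo[OF triv_cocycle afK])
    have B0: "0 \<le> C * norm2k \<kappa> f" using C[OF afK] opnorm_nonneg[OF bo] nk by simp
    show ?thesis
    proof (rule opnorm_le[OF B0])
      fix \<xi> :: "'a \<Rightarrow> complex" assume x: "\<xi> \<in> ell2"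
      define a\<xi> where "a\<xi> = (\<lambda>g. complex_of_real (cmod (\<xi> g)))"
      have ax: "a\<xi> \<in> ell2" "l2norm a\<xi> = l2norm \<xi>" using ell2_cmod[OF x] by (auto simp: a\<xi>_def)
      have pt: "cmod (piS \<sigma> f \<xi> h) \<le> 1 * cmod (piS triv af a\<xi> h)" for h
      proof -
        have "cmod (piS \<sigma> f \<xi> h) = cmod (\<Sum>g\<in>{g. f g \<noteq> 0}. f g * (\<sigma> g (- g + h) * \<xi> (- g + h)))"
          using x by (simp add: piS_def psum_def Lam_in)
        also have "\<dots> \<le> (\<Sum>g\<in>{g. f g \<noteq> 0}. cmod (f g) * cmod (\<xi> (- g + h)))"
          by (rule order_trans[OF norm_sum]) (simp add: norm_mult m)
        also have "\<dots> = cmod (piS triv af a\<xi> h)"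
        proof -
          have "piS triv af a\<xi> h = (\<Sum>g\<in>{g. f g \<noteq> 0}. complex_of_real (cmod (f g) * cmod (\<xi> (- g + h))))"
            using ax by (simp add: piS_def psum_def Lam_in supp triv_def af_def a\<xi>_def)
          also have "\<dots> = complex_of_real (\<Sum>g\<in>{g. f g \<noteq> 0}. cmod (f g) * cmod (\<xi> (- g + h)))"
            by (simp only: of_real_sum)
          finally have eq: "piS triv af a\<xi> h = complex_of_real (\<Sum>g\<in>{g. f g \<noteq> 0}. cmod (f g) * cmod (\<xi> (- g + h)))" .
          have "(\<Sum>g\<in>{g. f g \<noteq> 0}. cmod (f g) * cmod (\<xi> (- g + h))) \<ge> 0"
            by (intro sum_nonneg) auto
          then show ?thesis by (simp only: eq norm_of_real abs_of_nonneg)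
        qed
        finally show ?thesis by simp
      qed
      have "l2norm (piS \<sigma> f \<xi>) \<le> 1 * l2norm (piS triv af a\<xi>)"
        using l2_dom[OF bo_ell2[OF bo ax(1)], of 1 "piS \<sigma> f \<xi>"] pt by simp
      also have "\<dots> \<le> opnorm (piS triv af) * l2norm a\<xi>" using opnorm_bound[OF bo ax(1)] by simp
      also have "\<dots> \<le> C * norm2k \<kappa> f * l2norm \<xi>"
        using C[OF afK] nk ax(2) by (simp add: mult_right_mono)
      finally show "l2norm (piS \<sigma> f \<xi>) \<le> C * norm2k \<kappa> f * l2norm \<xi>" .
    qed
  qed
  then show ?thesis by (auto simp: pi_bounded_def)
qed



definition Tlim :: "('g::group_add \<Rightarrow> 'g \<Rightarrow> complex) \<Rightarrow> ('g \<Rightarrow> complex) \<Rightarrow> 'g op" where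
  "Tlim \<sigma> \<xi> = (\<lambda>\<eta>. if \<eta> \<in> ell2 then (\<lambda>h. \<Sum>\<^sub>\<infinity>g. \<xi> g * Lam \<sigma> g \<eta> h) else (\<lambda>_. 0))"

lemma reflect_ell2:
  fixes \<eta> :: "'g::group_add \<Rightarrow> complex"
  assumes "\<eta> \<in> ell2"
  shows "(\<lambda>g. \<eta> (- g + h)) \<in> ell2"
proof -
  have "((\<lambda>g. \<eta> (- g + h)) \<in> ell2 \<longleftrightarrow> \<eta> \<in> ell2) \<and> l2norm (\<lambda>g. \<eta> (- g + h)) = l2norm \<eta>"
    by (rule reindex_ell2[of _ "\<lambda>x. h + - x"]) (simp_all add: minus_add add.assoc[symmetric])
  then show ?thesis using assms by simp
qed

lemma Tsum_abs:
  assumes s: "cocycle \<sigma>" and x: "\<xi> \<in> ell2" and e: "\<eta> \<in> ell2"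
  shows "(\<lambda>g. cmod (\<xi> g * Lam \<sigma> g \<eta> h)) summable_on UNIV"
proof -
  have m: "\<And>a b. cmod (\<sigma> a b) = 1" using s by (simp add: cocycle_def)
  have z: "(\<lambda>g. cnj (\<eta> (- g + h))) \<in> ell2"
    using reflect_ell2[OF e, of h] cmod_eq_ell2[of "\<lambda>g. cnj (\<eta> (- g + h))" "\<lambda>g. \<eta> (- g + h)"] by simp
  have "(\<lambda>g. cmod (\<xi> g * cnj (cnj (\<eta> (- g + h))))) summable_on UNIV"
    using l2inner_abs[OF x z] by blast
  then show ?thesis using e by (simp add: Lam_in norm_mult m)
qed

lemma Tsum:
  assumes "cocycle \<sigma>" "\<xi> \<in> ell2" "\<eta> \<in> ell2"
  shows "(\<lambda>g. \<xi> g * Lam \<sigma> g \<eta> h) summable_on UNIV"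
  by (rule abs_summable_summable) (use Tsum_abs[OF assms] in auto)

lemma psum_tendsto:
  assumes "cocycle \<sigma>" "\<xi> \<in> ell2" "\<eta> \<in> ell2"
  shows "((\<lambda>F. psum \<sigma> \<xi> F \<eta> h) \<longlongrightarrow> Tlim \<sigma> \<xi> \<eta> h) (finite_subsets_at_top UNIV)"
  using infsum_tendsto[OF Tsum[OF assms, of h]] assms(3) by (simp add: psum_def Tlim_def)

lemma conv_main:
  fixes nrm :: "('g::group_add \<Rightarrow> complex) \<Rightarrow> real"
  assumes s: "cocycle \<sigma>" and x: "\<xi> \<in> ell2"
    and dec: "\<forall>\<epsilon>>0. \<exists>F0. finite F0 \<and> (\<forall>F. finite F \<and> F \<inter> F0 = {} \<longrightarrow> nrm (chiF F \<xi>) < \<epsilon>)"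
    and C: "C > 0" "\<And>f. f \<in> Kfin \<Longrightarrow> opnorm (piS \<sigma> f) \<le> C * nrm f"
    and eps: "\<epsilon> > 0"
  shows "\<exists>F0. finite F0 \<and> (\<forall>F. finite F \<and> F0 \<subseteq> F \<longrightarrow> (\<forall>\<eta>\<in>ell2.
      (\<lambda>h. psum \<sigma> \<xi> F \<eta> h - Tlim \<sigma> \<xi> \<eta> h) \<in> ell2 \<and> l2norm (\<lambda>h. psum \<sigma> \<xi> F \<eta> h - Tlim \<sigma> \<xi> \<eta> h) \<le> \<epsilon> * l2norm \<eta>))"
proof -
  obtain F0 where F0: "finite F0" "\<And>F. finite F \<Longrightarrow> F \<inter> F0 = {} \<Longrightarrow> nrm (chiF F \<xi>) < \<epsilon> / C"
    using dec eps C(1) by (meson divide_pos_pos)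
  have main: "(\<lambda>h. psum \<sigma> \<xi> F \<eta> h - Tlim \<sigma> \<xi> \<eta> h) \<in> ell2 \<and> l2norm (\<lambda>h. psum \<sigma> \<xi> F \<eta> h - Tlim \<sigma> \<xi> \<eta> h) \<le> \<epsilon> * l2norm \<eta>"
    if F: "finite F" "F0 \<subseteq> F" and e: "\<eta> \<in> ell2" for F \<eta>
  proof (rule l2_bound)
    show "0 \<le> \<epsilon> * l2norm \<eta>" using eps by simp
    fix H :: "'g set" assume H: "finite H"
    define \<Phi> where "\<Phi> F' = (\<Sum>h\<in>H. (cmod (psum \<sigma> \<xi> F \<eta> h - psum \<sigma> \<xi> F' \<eta> h))^2)" for F'
    have lim: "(\<Phi> \<longlongrightarrow> (\<Sum>h\<in>H. (cmod (psum \<sigma> \<xi> F \<eta> h - Tlim \<sigma> \<xi> \<eta> h))^2)) (finite_subsets_at_top UNIV)"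
      unfolding \<Phi>_def
      by (intro tendsto_sum tendsto_power tendsto_norm tendsto_diff tendsto_const psum_tendsto s x e)
    have ev: "eventually (\<lambda>F'. \<Phi> F' \<le> (\<epsilon> * l2norm \<eta>)^2) (finite_subsets_at_top UNIV)"
      unfolding eventually_finite_subsets_at_top
    proof (intro exI[of _ F] conjI allI impI)
      fix Y assume Y: "finite Y \<and> F \<subseteq> Y \<and> Y \<subseteq> UNIV"
      define f where "f = chiF (Y - F) \<xi>"
      have fK: "f \<in> Kfin" using Y by (simp add: f_def chiF_Kfin)
      have bo: "piS \<sigma> f \<in> bdd_ops" by (rule piS_bo[OF s fK])
      have nf: "nrm f < \<epsilon> / C" unfolding f_def using Y F by (intro F0) auto
      have eq: "psum \<sigma> \<xi> F \<eta> h - psum \<sigma> \<xi> Y \<eta> h = - piS \<sigma> f \<eta> h" for h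
        using psum_split[of Y F \<sigma> \<xi> \<eta> h] Y psum_chiF[of "Y - F" \<sigma> \<xi>] by (simp add: f_def)
      have "\<Phi> Y = (\<Sum>h\<in>H. (cmod (piS \<sigma> f \<eta> h))^2)" unfolding \<Phi>_def eq by simp
      also have "\<dots> \<le> (l2norm (piS \<sigma> f \<eta>))^2" by (rule sum_le_l2norm_sq[OF bo_ell2[OF bo e] H])
      also have "\<dots> \<le> (opnorm (piS \<sigma> f) * l2norm \<eta>)^2"
        by (rule power_mono[OF opnorm_bound[OF bo e]]) simp
      also have "\<dots> \<le> (\<epsilon> * l2norm \<eta>)^2"
      proof (rule power_mono)
        have "opnorm (piS \<sigma> f) \<le> C * nrm f" by (rule C(2)[OF fK])
        also have "\<dots> \<le> \<epsilon>" using nf C(1) by (simp add: field_simps)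
        finally show "opnorm (piS \<sigma> f) * l2norm \<eta> \<le> \<epsilon> * l2norm \<eta>" by (simp add: mult_right_mono)
        show "0 \<le> opnorm (piS \<sigma> f) * l2norm \<eta>" using opnorm_nonneg[OF bo] by simp
      qed
      finally show "\<Phi> Y \<le> (\<epsilon> * l2norm \<eta>)^2" .
    qed (use F in auto)
    show "(\<Sum>h\<in>H. (cmod (psum \<sigma> \<xi> F \<eta> h - Tlim \<sigma> \<xi> \<eta> h))^2) \<le> (\<epsilon> * l2norm \<eta>)^2"
      by (rule tendsto_upperbound[OF lim ev]) simp
  qed
  show ?thesis using F0(1) main by blast
qed



locale convsetup =
  fixes \<sigma> :: "'g::group_add \<Rightarrow> 'g \<Rightarrow> complex" and \<xi> :: "'g \<Rightarrow> complex" and nrm :: "('g \<Rightarrow> complex) \<Rightarrow> real" and C :: real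
  assumes s: "cocycle \<sigma>" and x: "\<xi> \<in> ell2"
    and dec: "\<forall>\<epsilon>>0. \<exists>F0. finite F0 \<and> (\<forall>F. finite F \<and> F \<inter> F0 = {} \<longrightarrow> nrm (chiF F \<xi>) < \<epsilon>)"
    and Cpos: "C > 0" and Cb: "\<And>f. f \<in> Kfin \<Longrightarrow> opnorm (piS \<sigma> f) \<le> C * nrm f"
begin

lemma conv: "\<epsilon> > 0 \<Longrightarrow> \<exists>F0. finite F0 \<and> (\<forall>F. finite F \<and> F0 \<subseteq> F \<longrightarrow> (\<forall>\<eta>\<in>ell2.
      (\<lambda>h. psum \<sigma> \<xi> F \<eta> h - Tlim \<sigma> \<xi> \<eta> h) \<in> ell2 \<and> l2norm (\<lambda>h. psum \<sigma> \<xi> F \<eta> h - Tlim \<sigma> \<xi> \<eta> h) \<le> \<epsilon> * l2norm \<eta>))"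
  by (rule conv_main[OF s x dec Cpos Cb])

lemma Tlim_bo: "Tlim \<sigma> \<xi> \<in> bdd_ops"
proof -
  obtain F0 where F0: "finite F0" "\<And>\<eta>. \<eta> \<in> ell2 \<Longrightarrow>
      (\<lambda>h. psum \<sigma> \<xi> F0 \<eta> h - Tlim \<sigma> \<xi> \<eta> h) \<in> ell2 \<and> l2norm (\<lambda>h. psum \<sigma> \<xi> F0 \<eta> h - Tlim \<sigma> \<xi> \<eta> h) \<le> 1 * l2norm \<eta>"
    using conv[of 1] by auto
  define P where "P = psum \<sigma> \<xi> F0"
  have P: "P \<in> bdd_ops" unfolding P_def by (rule psum_bo[OF s F0(1)])
  show ?thesis
  proof (rule bdd_opsI[where C="opnorm P + 1"])
    fix \<eta> :: "'g \<Rightarrow> complex" assume e: "\<eta> \<in> ell2"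
    define D where "D = (\<lambda>h. P \<eta> h - Tlim \<sigma> \<xi> \<eta> h)"
    have D: "D \<in> ell2" "l2norm D \<le> l2norm \<eta>" using F0(2)[OF e] by (auto simp: D_def P_def)
    have eq: "Tlim \<sigma> \<xi> \<eta> = (\<lambda>h. P \<eta> h - D h)" by (simp add: D_def)
    show "Tlim \<sigma> \<xi> \<eta> \<in> ell2" unfolding eq by (rule ell2_diff[OF bo_ell2[OF P e] D(1)])
    have "l2norm (Tlim \<sigma> \<xi> \<eta>) \<le> l2norm (P \<eta>) + l2norm D" unfolding eq by (rule l2norm_diff[OF bo_ell2[OF P e] D(1)])
    also have "\<dots> \<le> opnorm P * l2norm \<eta> + l2norm \<eta>" using opnorm_bound[OF P e] D(2) by simp
    finally show "l2norm (Tlim \<sigma> \<xi> \<eta>) \<le> (opnorm P + 1) * l2norm \<eta>" by (simp add: algebra_simps)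
  next
    fix \<eta> \<eta>' :: "'g \<Rightarrow> complex" and a b assume e: "\<eta> \<in> ell2" "\<eta>' \<in> ell2"
    have l: "(\<lambda>g. a * \<eta> g + b * \<eta>' g) \<in> ell2" by (rule ell2_lin[OF e])
    show "Tlim \<sigma> \<xi> (\<lambda>g. a * \<eta> g + b * \<eta>' g) = (\<lambda>h. a * Tlim \<sigma> \<xi> \<eta> h + b * Tlim \<sigma> \<xi> \<eta>' h)"
    proof
      fix h
      have lam: "Lam \<sigma> g (\<lambda>g. a * \<eta> g + b * \<eta>' g) h = a * Lam \<sigma> g \<eta> h + b * Lam \<sigma> g \<eta>' h" for g
        using bo_lin[OF Lam_bo[OF s] e, of g a b] by (simp add: fun_eq_iff)
      have s1: "(\<lambda>g. a * (\<xi> g * Lam \<sigma> g \<eta> h)) summable_on UNIV"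
        by (rule summable_on_cmult_right[OF Tsum[OF s x e(1)]])
      have s2: "(\<lambda>g. b * (\<xi> g * Lam \<sigma> g \<eta>' h)) summable_on UNIV"
        by (rule summable_on_cmult_right[OF Tsum[OF s x e(2)]])
      have "Tlim \<sigma> \<xi> (\<lambda>g. a * \<eta> g + b * \<eta>' g) h = (\<Sum>\<^sub>\<infinity>g. a * (\<xi> g * Lam \<sigma> g \<eta> h) + b * (\<xi> g * Lam \<sigma> g \<eta>' h))"
        using l by (simp add: Tlim_def lam algebra_simps)
      also have "\<dots> = (\<Sum>\<^sub>\<infinity>g. a * (\<xi> g * Lam \<sigma> g \<eta> h)) + (\<Sum>\<^sub>\<infinity>g. b * (\<xi> g * Lam \<sigma> g \<eta>' h))"
        by (rule infsum_add[OF s1 s2])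
      also have "\<dots> = a * Tlim \<sigma> \<xi> \<eta> h + b * Tlim \<sigma> \<xi> \<eta>' h"
        using e by (simp add: Tlim_def infsum_cmult_right')
      finally show "Tlim \<sigma> \<xi> (\<lambda>g. a * \<eta> g + b * \<eta>' g) h = a * Tlim \<sigma> \<xi> \<eta> h + b * Tlim \<sigma> \<xi> \<eta>' h" .
    qed
  next
    fix \<eta> :: "'g \<Rightarrow> complex" assume "\<eta> \<notin> ell2"
    then show "Tlim \<sigma> \<xi> \<eta> = (\<lambda>_. 0)" by (simp add: Tlim_def)
  qed
qed

lemma Tlim_net: "op_net_conv (psum \<sigma> \<xi>) (Tlim \<sigma> \<xi>)"
  unfolding op_net_conv_def
proof (intro allI impI)
  fix \<epsilon> :: real assume eps: "\<epsilon> > 0"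
  obtain F0 where F0: "finite F0" "\<And>F \<eta>. finite F \<Longrightarrow> F0 \<subseteq> F \<Longrightarrow> \<eta> \<in> ell2 \<Longrightarrow>
      l2norm (\<lambda>h. psum \<sigma> \<xi> F \<eta> h - Tlim \<sigma> \<xi> \<eta> h) \<le> (\<epsilon>/2) * l2norm \<eta>"
    using conv[of "\<epsilon>/2"] eps by auto
  have "opnorm (op_minus (psum \<sigma> \<xi> F) (Tlim \<sigma> \<xi>)) < \<epsilon>" if "finite F" "F0 \<subseteq> F" for F
  proof -
    have "opnorm (op_minus (psum \<sigma> \<xi> F) (Tlim \<sigma> \<xi>)) \<le> \<epsilon>/2"
      by (rule opnorm_le) (use eps F0(2)[OF that] in \<open>auto simp: op_minus_def\<close>)
    then show ?thesis using eps by simp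
  qed
  then show "\<exists>F0. finite F0 \<and> (\<forall>F. finite F \<and> F0 \<subseteq> F \<longrightarrow> opnorm (op_minus (psum \<sigma> \<xi> F) (Tlim \<sigma> \<xi>)) < \<epsilon>)"
    using F0(1) by blast
qed

end

lemma net_unique:
  assumes P: "\<And>F. finite F \<Longrightarrow> P F \<in> bdd_ops" and T1: "T1 \<in> bdd_ops" and T2: "T2 \<in> bdd_ops"
    and c1: "op_net_conv P T1" and c2: "op_net_conv P T2"
  shows "T1 = T2"
proof
  fix \<eta> :: "'a \<Rightarrow> complex"
  show "T1 \<eta> = T2 \<eta>"
  proof (cases "\<eta> \<in> ell2")
    case False
    then show ?thesis using bo_out[OF T1] bo_out[OF T2] by simp
  next
    case e: True
    have d: "(\<lambda>h. T1 \<eta> h - T2 \<eta> h) \<in> ell2" by (rule ell2_diff[OF bo_ell2[OF T1 e] bo_ell2[OF T2 e]])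
    have "l2norm (\<lambda>h. T1 \<eta> h - T2 \<eta> h) \<le> 0 + \<epsilon>" if eps: "\<epsilon> > 0" for \<epsilon>
    proof -
      define \<delta> where "\<delta> = \<epsilon> / (2 * (l2norm \<eta> + 1))"
      have pos: "l2norm \<eta> + 1 > 0" using l2norm_nonneg[of \<eta>] by linarith
      then have dp: "\<delta> > 0" unfolding \<delta>_def using eps by simp
      obtain F1 where F1: "finite F1" "\<And>F. finite F \<and> F1 \<subseteq> F \<Longrightarrow> opnorm (op_minus (P F) T1) < \<delta>"
        using c1 dp unfolding op_net_conv_def by blast
      obtain F2 where F2: "finite F2" "\<And>F. finite F \<and> F2 \<subseteq> F \<Longrightarrow> opnorm (op_minus (P F) T2) < \<delta>"
        using c2 dp unfolding op_net_conv_def by blast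
      define F where "F = F1 \<union> F2"
      have Fb: "P F \<in> bdd_ops" using F1 F2 by (simp add: F_def P)
      have b1: "l2norm (\<lambda>h. P F \<eta> h - T1 \<eta> h) \<le> \<delta> * l2norm \<eta>"
      proof -
        have "l2norm (op_minus (P F) T1 \<eta>) \<le> opnorm (op_minus (P F) T1) * l2norm \<eta>"
          by (rule opnorm_bound[OF op_minus_bo[OF Fb T1] e])
        also have "\<dots> \<le> \<delta> * l2norm \<eta>" using F1(2)[of F] F1(1) F2(1) by (intro mult_right_mono) (auto simp: F_def)
        finally show ?thesis by (simp add: op_minus_def)
      qed
      have b2: "l2norm (\<lambda>h. P F \<eta> h - T2 \<eta> h) \<le> \<delta> * l2norm \<eta>"
      proof -
        have "l2norm (op_minus (P F) T2 \<eta>) \<le> opnorm (op_minus (P F) T2) * l2norm \<eta>"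
          by (rule opnorm_bound[OF op_minus_bo[OF Fb T2] e])
        also have "\<dots> \<le> \<delta> * l2norm \<eta>" using F2(2)[of F] F1(1) F2(1) by (intro mult_right_mono) (auto simp: F_def)
        finally show ?thesis by (simp add: op_minus_def)
      qed
      have eq: "(\<lambda>h. T1 \<eta> h - T2 \<eta> h) = (\<lambda>h. (P F \<eta> h - T2 \<eta> h) - (P F \<eta> h - T1 \<eta> h))" by auto
      have "l2norm (\<lambda>h. T1 \<eta> h - T2 \<eta> h) \<le> l2norm (\<lambda>h. P F \<eta> h - T2 \<eta> h) + l2norm (\<lambda>h. P F \<eta> h - T1 \<eta> h)"
        unfolding eq by (rule l2norm_diff; rule ell2_diff; intro bo_ell2[OF Fb e] bo_ell2[OF T1 e] bo_ell2[OF T2 e])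
      also have "\<dots> \<le> 2 * \<delta> * l2norm \<eta>" using b1 b2 by simp
      also have "\<dots> \<le> \<epsilon>"
      proof -
        have "2 * \<delta> * l2norm \<eta> = \<epsilon> * (l2norm \<eta> / (l2norm \<eta> + 1))"
          using pos by (simp add: \<delta>_def field_simps)
        also have "\<dots> \<le> \<epsilon> * 1" using eps pos by (intro mult_left_mono) (auto simp: field_simps)
        finally show ?thesis by simp
      qed
      finally show ?thesis by simp
    qed
    then have "l2norm (\<lambda>h. T1 \<eta> h - T2 \<eta> h) \<le> 0" by (rule field_le_epsilon)
    then have "(\<lambda>h. T1 \<eta> h - T2 \<eta> h) = (\<lambda>_. 0)" by (rule l2norm_le0[OF d])
    then show ?thesis by (simp add: fun_eq_iff)
  qed
qed

context convsetup
begin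

lemma tpi_eq: "tpi \<sigma> \<xi> = Tlim \<sigma> \<xi>"
  unfolding tpi_def
proof (rule the_equality)
  show "Tlim \<sigma> \<xi> \<in> bdd_ops \<and> op_net_conv (psum \<sigma> \<xi>) (Tlim \<sigma> \<xi>)" using Tlim_bo Tlim_net by blast
  fix T assume "T \<in> bdd_ops \<and> op_net_conv (psum \<sigma> \<xi>) T"
  then show "T = Tlim \<sigma> \<xi>" using net_unique[of "psum \<sigma> \<xi>" T "Tlim \<sigma> \<xi>"] Tlim_bo Tlim_net psum_bo[OF s] by blast
qed

end

lemma delta_e_dlt: "delta_e = dlt 0"
  by (simp add: delta_e_def dlt_def fun_eq_iff)

lemma hat_Tlim:
  assumes s: "cocycle \<sigma>"
  shows "hat (Tlim \<sigma> \<xi>) = \<xi>"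
proof
  fix h
  have n: "\<sigma> h 0 = 1" using s by (simp add: cocycle_def)
  have "((\<lambda>g. \<xi> g * Lam \<sigma> g delta_e h) has_sum \<xi> h) UNIV"
  proof (rule has_sum_finite_neutralI[of "{h}"])
    have de: "Lam \<sigma> g delta_e h = \<sigma> g (- g + h) * delta_e (- g + h)" for g
      using Lam_in[of delta_e \<sigma> g] dlt_ell2[of 0] by (simp add: delta_e_dlt)
    show "\<And>x. x \<in> UNIV - {h} \<Longrightarrow> \<xi> x * Lam \<sigma> x delta_e h = 0"
      by (simp only: de) (simp add: delta_e_def neg_add_eq0_iff)
    show "\<xi> h = (\<Sum>x\<in>{h}. \<xi> x * Lam \<sigma> x delta_e h)" by (simp only: de) (simp add: delta_e_def n)
  qed auto
  then show "hat (Tlim \<sigma> \<xi>) h = \<xi> h"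
    by (simp add: hat_def Tlim_def delta_e_dlt infsumI)
qed



lemma sa_bo: "star_subalg A \<Longrightarrow> A \<subseteq> bdd_ops" by (simp add: star_subalg_def)
lemma sa_add: "star_subalg A \<Longrightarrow> S \<in> A \<Longrightarrow> T \<in> A \<Longrightarrow> op_add S T \<in> A"
  unfolding star_subalg_def by blast
lemma sa_comp: "star_subalg A \<Longrightarrow> S \<in> A \<Longrightarrow> T \<in> A \<Longrightarrow> S \<circ> T \<in> A"
  unfolding star_subalg_def by blast
lemma sa_smult: "star_subalg A \<Longrightarrow> T \<in> A \<Longrightarrow> op_smult c T \<in> A"
  unfolding star_subalg_def by blast
lemma sa_adj: "star_subalg A \<Longrightarrow> T \<in> A \<Longrightarrow> op_adj T \<in> A"
  unfolding star_subalg_def by blast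

lemma psum_in_alg:
  assumes A: "star_subalg A" "range (Lam \<sigma>) \<subseteq> A" and F: "finite F"
  shows "psum \<sigma> f F \<in> A"
  using F
proof (induction F rule: finite_induct)
  case empty
  have "psum \<sigma> f {} = op_smult 0 (Lam \<sigma> 0)" by (simp add: psum_def op_smult_def fun_eq_iff)
  moreover have "Lam \<sigma> 0 \<in> A" using A(2) by blast
  ultimately show ?case using sa_smult[OF A(1)] by simp
next
  case (insert x F)
  have "psum \<sigma> f (insert x F) = op_add (op_smult (f x) (Lam \<sigma> x)) (psum \<sigma> f F)"
    using insert(1,2) by (simp add: psum_def op_smult_def op_add_def fun_eq_iff)
  moreover have "Lam \<sigma> x \<in> A" using A(2) by blast
  ultimately show ?case using sa_smult[OF A(1)] sa_add[OF A(1)] insert(3) by simp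
qed

lemma net_get:
  assumes "op_net_conv P T" "\<epsilon> > 0"
  obtains F0 where "finite F0" "\<And>F. finite F \<Longrightarrow> F0 \<subseteq> F \<Longrightarrow> opnorm (op_minus (P F) T) < \<epsilon>"
proof -
  have "\<exists>F0. finite F0 \<and> (\<forall>F. finite F \<and> F0 \<subseteq> F \<longrightarrow> opnorm (op_minus (P F) T) < \<epsilon>)"
    using assms unfolding op_net_conv_def by simp
  then show ?thesis using that by auto
qed

lemma net_in_norm_closed:
  assumes T: "T \<in> bdd_ops" and c: "op_net_conv P T" and PA: "\<And>F. finite F \<Longrightarrow> P F \<in> A"
    and nc: "norm_closed A"
  shows "T \<in> A"
proof -
  have "\<exists>S\<in>A. opnorm (op_minus T S) < \<epsilon>" if eps: "\<epsilon> > 0" for \<epsilon>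
  proof -
    obtain F0 where F0: "finite F0" "\<And>F. finite F \<Longrightarrow> F0 \<subseteq> F \<Longrightarrow> opnorm (op_minus (P F) T) < \<epsilon>"
      using net_get[OF c eps] by blast
    have "opnorm (op_minus T (P F0)) < \<epsilon>" using F0(2)[OF F0(1) order_refl] by (simp only: opnorm_minus_sym)
    then show ?thesis using PA[OF F0(1)] by blast
  qed
  then have "\<forall>\<epsilon>>0. \<exists>S\<in>A. opnorm (op_minus T S) < \<epsilon>" by blast
  then show ?thesis using nc T unfolding norm_closed_def by blast
qed

lemma net_in_wot_closed:
  assumes T: "T \<in> bdd_ops" and c: "op_net_conv P T" and PA: "\<And>F. finite F \<Longrightarrow> P F \<in> A"
    and wc: "wot_closed A" and Ab: "A \<subseteq> bdd_ops"
  shows "T \<in> A"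
proof -
  have "\<exists>S\<in>A. \<forall>(\<xi>,\<eta>)\<in>Q. cmod (l2inner (T \<xi>) \<eta> - l2inner (S \<xi>) \<eta>) < \<epsilon>"
    if Q: "finite Q" "Q \<subseteq> ell2 \<times> ell2" and eps: "\<epsilon> > 0" for Q \<epsilon>
  proof -
    define M where "M = (\<Sum>(\<xi>,\<eta>)\<in>Q. l2norm \<xi> * l2norm \<eta>) + 1"
    have M0: "(\<Sum>(\<xi>,\<eta>)\<in>Q. l2norm \<xi> * l2norm \<eta>) \<ge> 0" by (intro sum_nonneg) auto
    then have Mp: "M > 0" by (simp add: M_def)
    have Mle: "l2norm \<xi> * l2norm \<eta> \<le> M - 1" if "(\<xi>,\<eta>) \<in> Q" for \<xi> \<eta>
    proof -
      have "(\<lambda>(\<xi>,\<eta>). l2norm \<xi> * l2norm \<eta>) (\<xi>,\<eta>) \<le> (\<Sum>(\<xi>,\<eta>)\<in>Q. l2norm \<xi> * l2norm \<eta>)"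
        by (rule member_le_sum) (use that Q in auto)
      then show ?thesis by (simp add: M_def)
    qed
    define \<delta> where "\<delta> = \<epsilon> / M"
    have dp: "\<delta> > 0" using eps Mp by (simp add: \<delta>_def)
    obtain F0 where F0': "finite F0" "\<And>F. finite F \<Longrightarrow> F0 \<subseteq> F \<Longrightarrow> opnorm (op_minus (P F) T) < \<delta>"
      using net_get[OF c dp] by blast
    have F0: "finite F0" "opnorm (op_minus (P F0) T) < \<delta>" using F0'(1) F0'(2)[OF F0'(1) order_refl] by auto
    define S where "S = P F0"
    have SA: "S \<in> A" using PA F0 by (simp add: S_def)
    have Sb: "S \<in> bdd_ops" using SA Ab by blast
    have "cmod (l2inner (T \<xi>) \<eta> - l2inner (S \<xi>) \<eta>) < \<epsilon>" if "(\<xi>,\<eta>) \<in> Q" for \<xi> \<eta>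
    proof -
      have x: "\<xi> \<in> ell2" and e: "\<eta> \<in> ell2" using that Q by auto
      have "l2inner (T \<xi>) \<eta> - l2inner (S \<xi>) \<eta> = l2inner (op_minus T S \<xi>) \<eta>"
        unfolding op_minus_def by (rule l2inner_diff1[symmetric, OF bo_ell2[OF T x] bo_ell2[OF Sb x] e])
      then have "cmod (l2inner (T \<xi>) \<eta> - l2inner (S \<xi>) \<eta>) \<le> l2norm (op_minus T S \<xi>) * l2norm \<eta>"
        using l2inner_bound[OF bo_ell2[OF op_minus_bo[OF T Sb] x] e] by simp
      also have "\<dots> \<le> (opnorm (op_minus T S) * l2norm \<xi>) * l2norm \<eta>"
        by (intro mult_right_mono opnorm_bound[OF op_minus_bo[OF T Sb] x]) auto
      also have "\<dots> \<le> \<delta> * (l2norm \<xi> * l2norm \<eta>)"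
      proof -
        have o: "opnorm (op_minus T S) \<le> \<delta>" using F0(2) opnorm_minus_sym[of T S] by (simp add: S_def)
        have "(opnorm (op_minus T S) * l2norm \<xi>) * l2norm \<eta> = opnorm (op_minus T S) * (l2norm \<xi> * l2norm \<eta>)"
          by (simp only: mult.assoc)
        also have "\<dots> \<le> \<delta> * (l2norm \<xi> * l2norm \<eta>)" by (rule mult_right_mono[OF o]) simp
        finally show ?thesis .
      qed
      also have "\<dots> \<le> \<delta> * (M - 1)" using Mle[OF that] dp by (intro mult_left_mono) auto
      also have "\<dots> < \<epsilon>" using dp Mp by (simp add: \<delta>_def field_simps)
      finally show ?thesis .
    qed
    then show ?thesis using SA by blast
  qed
  note approx = this
  show ?thesis
    by (rule mp[OF bspec[OF wc[unfolded wot_closed_def] T]]) (intro allI impI, elim conjE, rule approx)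
qed

lemma Tlim_Cr_vN:
  assumes s: "cocycle \<sigma>" and T: "T \<in> bdd_ops" and c: "op_net_conv (psum \<sigma> \<xi>) T"
  shows "T \<in> Cr \<sigma> \<and> T \<in> vN \<sigma>"
proof
  show "T \<in> Cr \<sigma>" unfolding Cr_def
  proof (rule InterI)
    fix A assume "A \<in> {A. star_subalg A \<and> norm_closed A \<and> range (Lam \<sigma>) \<subseteq> A}"
    then have A: "star_subalg A" "norm_closed A" "range (Lam \<sigma>) \<subseteq> A" by auto
    show "T \<in> A" by (rule net_in_norm_closed[OF T c psum_in_alg[OF A(1) A(3)] A(2)])
  qed
  show "T \<in> vN \<sigma>" unfolding vN_def
  proof (rule InterI)
    fix A assume "A \<in> {A. star_subalg A \<and> wot_closed A \<and> range (Lam \<sigma>) \<subseteq> A}"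
    then have A: "star_subalg A" "wot_closed A" "range (Lam \<sigma>) \<subseteq> A" by auto
    have Ab: "A \<subseteq> bdd_ops" using sa_bo[OF A(1)] .
    show "T \<in> A" by (rule net_in_wot_closed[OF T c psum_in_alg[OF A(1) A(3)] A(2) Ab])
  qed
qed



lemma finsum_ell2:
  "finite H \<Longrightarrow> (\<And>g. g \<in> H \<Longrightarrow> \<zeta> g \<in> ell2) \<Longrightarrow> (\<lambda>h. \<Sum>g\<in>H. c g * \<zeta> g h) \<in> ell2"
proof (induction H rule: finite_induct)
  case empty
  then show ?case by simp
next
  case (insert x F)
  have "(\<lambda>h. \<Sum>g\<in>insert x F. c g * \<zeta> g h) = (\<lambda>h. c x * \<zeta> x h + 1 * (\<Sum>g\<in>F. c g * \<zeta> g h))"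
    using insert(1,2) by simp
  moreover have "(\<lambda>h. c x * \<zeta> x h + 1 * (\<Sum>g\<in>F. c g * \<zeta> g h)) \<in> ell2"
    using ell2_lin[of "\<zeta> x" "\<lambda>h. \<Sum>g\<in>F. c g * \<zeta> g h" "c x" 1] insert by simp
  ultimately show ?case by simp
qed

lemma bo_finsum:
  assumes T: "T \<in> bdd_ops"
  shows "finite H \<Longrightarrow> (\<And>g. g \<in> H \<Longrightarrow> \<zeta> g \<in> ell2) \<Longrightarrow> T (\<lambda>h. \<Sum>g\<in>H. c g * \<zeta> g h) = (\<lambda>h. \<Sum>g\<in>H. c g * T (\<zeta> g) h)"
proof (induction H rule: finite_induct)
  case empty
  then show ?case using bo_zero[OF T] by simp
next
  case (insert x F)
  have e: "(\<lambda>h. \<Sum>g\<in>insert x F. c g * \<zeta> g h) = (\<lambda>h. c x * \<zeta> x h + 1 * (\<Sum>g\<in>F. c g * \<zeta> g h))"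
    using insert(1,2) by simp
  have F: "(\<lambda>h. \<Sum>g\<in>F. c g * \<zeta> g h) \<in> ell2" using finsum_ell2[of F \<zeta> c] insert by simp
  have "T (\<lambda>h. c x * \<zeta> x h + 1 * (\<Sum>g\<in>F. c g * \<zeta> g h)) = (\<lambda>h. c x * T (\<zeta> x) h + 1 * T (\<lambda>h. \<Sum>g\<in>F. c g * \<zeta> g h) h)"
    by (rule bo_lin[OF T]) (use insert F in auto)
  then show ?case unfolding e using insert by simp
qed

lemma inner_finsum1:
  assumes e: "\<eta> \<in> ell2"
  shows "finite H \<Longrightarrow> (\<And>g. g \<in> H \<Longrightarrow> \<zeta> g \<in> ell2) \<Longrightarrow> l2inner (\<lambda>h. \<Sum>g\<in>H. c g * \<zeta> g h) \<eta> = (\<Sum>g\<in>H. c g * l2inner (\<zeta> g) \<eta>)"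
proof (induction H rule: finite_induct)
  case empty
  then show ?case by (simp add: l2inner_def)
next
  case (insert x F)
  have e2: "(\<lambda>h. \<Sum>g\<in>insert x F. c g * \<zeta> g h) = (\<lambda>h. c x * \<zeta> x h + 1 * (\<Sum>g\<in>F. c g * \<zeta> g h))"
    using insert(1,2) by simp
  have F: "(\<lambda>h. \<Sum>g\<in>F. c g * \<zeta> g h) \<in> ell2" using finsum_ell2[of F \<zeta> c] insert by simp
  have "l2inner (\<lambda>h. c x * \<zeta> x h + 1 * (\<Sum>g\<in>F. c g * \<zeta> g h)) \<eta> = c x * l2inner (\<zeta> x) \<eta> + 1 * l2inner (\<lambda>h. \<Sum>g\<in>F. c g * \<zeta> g h) \<eta>"
    by (rule l2inner_lin1) (use insert F e in auto)
  then show ?case unfolding e2 using insert by simp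
qed

lemma trunc_sq:
  assumes H: "finite H"
  shows "trunc H f \<in> ell2 \<and> (l2norm (trunc H f))^2 = (\<Sum>g\<in>H. (cmod (f g))^2)"
proof -
  have hs: "((\<lambda>g. (cmod (trunc H f g))^2) has_sum (\<Sum>g\<in>H. (cmod (f g))^2)) UNIV"
    by (rule has_sum_finite_neutralI[OF H]) (auto simp: trunc_def)
  then have "trunc H f \<in> ell2" by (auto simp: ell2_def summable_on_def)
  then show ?thesis using hs by (simp add: l2norm_sq infsumI)
qed

definition adjT :: "'g op \<Rightarrow> 'g op" where
  "adjT T = (\<lambda>\<eta>. if \<eta> \<in> ell2 then (\<lambda>g. cnj (l2inner (T (dlt g)) \<eta>)) else (\<lambda>_. 0))"

lemma adjT_bound:
  assumes T: "T \<in> bdd_ops" and e: "\<eta> \<in> ell2"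
  shows "adjT T \<eta> \<in> ell2 \<and> l2norm (adjT T \<eta>) \<le> opnorm T * l2norm \<eta>"
proof -
  define a where "a g = l2inner (T (dlt g)) \<eta>" for g
  have eq: "adjT T \<eta> = (\<lambda>g. cnj (a g))" using e by (simp add: adjT_def a_def)
  have B: "(\<Sum>g\<in>H. (cmod (cnj (a g)))^2) \<le> (opnorm T * l2norm \<eta>)^2" if H: "finite H" for H
  proof -
    define S where "S = (\<Sum>g\<in>H. (cmod (a g))^2)"
    define \<zeta> where "\<zeta> = trunc H (\<lambda>g. cnj (a g))"
    have z: "\<zeta> \<in> ell2" "(l2norm \<zeta>)^2 = S" using trunc_sq[OF H, of "\<lambda>g. cnj (a g)"] by (auto simp: \<zeta>_def S_def)
    have zs: "\<zeta> = (\<lambda>h. \<Sum>g\<in>H. cnj (a g) * dlt g h)" unfolding \<zeta>_def by (rule trunc_finite_sum[OF H])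
    have "l2inner (T \<zeta>) \<eta> = l2inner (\<lambda>h. \<Sum>g\<in>H. cnj (a g) * T (dlt g) h) \<eta>"
      unfolding zs by (subst bo_finsum[OF T H]) auto
    also have "\<dots> = (\<Sum>g\<in>H. cnj (a g) * a g)"
      by (subst inner_finsum1[OF e H]) (auto intro: bo_ell2[OF T] simp: a_def)
    also have "\<dots> = (\<Sum>g\<in>H. complex_of_real ((cmod (a g))^2))"
      by (intro sum.cong refl) (subst complex_norm_square, simp add: mult.commute)
    also have "\<dots> = complex_of_real S" by (simp only: S_def of_real_sum)
    finally have ip: "l2inner (T \<zeta>) \<eta> = complex_of_real S" .
    have S0: "S \<ge> 0" by (simp add: S_def sum_nonneg)
    have "S = cmod (l2inner (T \<zeta>) \<eta>)" using ip S0 by simp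
    also have "\<dots> \<le> l2norm (T \<zeta>) * l2norm \<eta>" by (rule l2inner_bound[OF bo_ell2[OF T z(1)] e])
    also have "\<dots> \<le> (opnorm T * l2norm \<zeta>) * l2norm \<eta>" by (intro mult_right_mono opnorm_bound[OF T z(1)]) simp
    finally have Sle: "S \<le> opnorm T * l2norm \<eta> * sqrt S"
      using z(2) by (metis mult.commute mult.left_commute l2norm_nonneg real_sqrt_abs abs_of_nonneg power2_eq_square real_sqrt_mult_self)
    have "S \<le> (opnorm T * l2norm \<eta>)^2"
    proof (cases "S = 0")
      case True then show ?thesis by simp
    next
      case False
      then have sp: "sqrt S > 0" using S0 by simp
      have "sqrt S * sqrt S \<le> opnorm T * l2norm \<eta> * sqrt S" using Sle S0 by simp
      then have "sqrt S \<le> opnorm T * l2norm \<eta>" using sp by (rule mult_right_le_imp_le)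
      then have "(sqrt S)^2 \<le> (opnorm T * l2norm \<eta>)^2" using sp by (intro power_mono) auto
      then show ?thesis using S0 by simp
    qed
    then show ?thesis by (simp add: S_def)
  qed
  have "0 \<le> opnorm T * l2norm \<eta>" using opnorm_nonneg[OF T] by simp
  from l2_bound[OF this B] show ?thesis unfolding eq by simp
qed

lemma adjT_bo:
  assumes T: "T \<in> bdd_ops"
  shows "adjT T \<in> bdd_ops"
proof (rule bdd_opsI[where C="opnorm T"])
  fix \<eta> :: "'a \<Rightarrow> complex"
  show "\<eta> \<in> ell2 \<Longrightarrow> adjT T \<eta> \<in> ell2" using adjT_bound[OF T] by blast
  show "\<eta> \<in> ell2 \<Longrightarrow> l2norm (adjT T \<eta>) \<le> opnorm T * l2norm \<eta>" using adjT_bound[OF T] by blast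
  show "\<eta> \<notin> ell2 \<Longrightarrow> adjT T \<eta> = (\<lambda>_. 0)" by (simp add: adjT_def)
next
  fix \<eta> \<eta>' :: "'a \<Rightarrow> complex" and a b assume e: "\<eta> \<in> ell2" "\<eta>' \<in> ell2"
  have l: "(\<lambda>g. a * \<eta> g + b * \<eta>' g) \<in> ell2" by (rule ell2_lin[OF e])
  show "adjT T (\<lambda>g. a * \<eta> g + b * \<eta>' g) = (\<lambda>g. a * adjT T \<eta> g + b * adjT T \<eta>' g)"
    using l e by (simp add: adjT_def l2inner_lin2[OF e bo_ell2[OF T dlt_ell2]])
qed

lemma adjT_ident:
  assumes T: "T \<in> bdd_ops" and x: "\<xi> \<in> ell2" and e: "\<eta> \<in> ell2"
  shows "l2inner (T \<xi>) \<eta> = l2inner \<xi> (adjT T \<eta>)"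
proof -
  define a where "a g = l2inner (T (dlt g)) \<eta>" for g
  have eq: "adjT T \<eta> = (\<lambda>g. cnj (a g))" using e by (simp add: adjT_def a_def)
  define f where "f g = \<xi> g * a g" for g
  have r: "l2inner \<xi> (adjT T \<eta>) = infsum f UNIV" by (simp add: l2inner_def eq f_def[abs_def])
  have sm: "f summable_on UNIV"
    using l2inner_summable[OF x adjT_bound[OF T e, THEN conjunct1]] by (simp add: eq f_def[abs_def])
  have lim1: "(sum f \<longlongrightarrow> infsum f UNIV) (finite_subsets_at_top UNIV)" by (rule infsum_tendsto[OF sm])
  have fin: "sum f F = l2inner (T (trunc F \<xi>)) \<eta>" if F: "finite F" for F
  proof -
    have "l2inner (T (trunc F \<xi>)) \<eta> = l2inner (\<lambda>h. \<Sum>g\<in>F. \<xi> g * T (dlt g) h) \<eta>"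
      unfolding trunc_finite_sum[OF F] by (subst bo_finsum[OF T F]) auto
    also have "\<dots> = (\<Sum>g\<in>F. \<xi> g * a g)"
      by (subst inner_finsum1[OF e F]) (auto intro: bo_ell2[OF T] simp: a_def)
    finally show ?thesis by (simp add: f_def)
  qed
  have lim2: "(sum f \<longlongrightarrow> l2inner (T \<xi>) \<eta>) (finite_subsets_at_top UNIV)"
  proof (rule tendstoI)
    fix \<epsilon> :: real assume eps: "\<epsilon> > 0"
    define \<delta> where "\<delta> = \<epsilon> / 2 / ((opnorm T + 1) * (l2norm \<eta> + 1))"
    have p1: "opnorm T + 1 > 0" using opnorm_nonneg[OF T] by linarith
    have p2: "l2norm \<eta> + 1 > 0" using l2norm_nonneg[of \<eta>] by linarith
    have pos: "(opnorm T + 1) * (l2norm \<eta> + 1) > 0" using p1 p2 by simp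
    have dp: "\<delta> > 0" using eps pos by (simp add: \<delta>_def)
    obtain F0 where F0: "finite F0" "\<And>F. F0 \<subseteq> F \<Longrightarrow> l2norm (\<lambda>g. \<xi> g - trunc F \<xi> g) \<le> \<delta>"
      using trunc_approx[OF x dp] by blast
    show "eventually (\<lambda>F. dist (sum f F) (l2inner (T \<xi>) \<eta>) < \<epsilon>) (finite_subsets_at_top UNIV)"
      unfolding eventually_finite_subsets_at_top
    proof (intro exI[of _ F0] conjI allI impI)
      fix F assume F: "finite F \<and> F0 \<subseteq> F \<and> F \<subseteq> UNIV"
      have tF: "trunc F \<xi> \<in> ell2" by (rule trunc_ell2[OF x])
      have d: "(\<lambda>g. \<xi> g - trunc F \<xi> g) \<in> ell2" by (rule ell2_diff[OF x tF])
      have "l2inner (T \<xi>) \<eta> - sum f F = l2inner (T \<xi>) \<eta> - l2inner (T (trunc F \<xi>)) \<eta>" using fin F by simp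
      also have "\<dots> = l2inner (\<lambda>h. T \<xi> h - T (trunc F \<xi>) h) \<eta>"
        by (rule l2inner_diff1[symmetric, OF bo_ell2[OF T x] bo_ell2[OF T tF] e])
      also have "\<dots> = l2inner (T (\<lambda>g. \<xi> g - trunc F \<xi> g)) \<eta>" by (simp add: bo_diff[OF T x tF])
      finally have "cmod (l2inner (T \<xi>) \<eta> - sum f F) \<le> l2norm (T (\<lambda>g. \<xi> g - trunc F \<xi> g)) * l2norm \<eta>"
        using l2inner_bound[OF bo_ell2[OF T d] e] by simp
      also have "\<dots> \<le> (opnorm T * l2norm (\<lambda>g. \<xi> g - trunc F \<xi> g)) * l2norm \<eta>"
        by (intro mult_right_mono opnorm_bound[OF T d]) simp
      also have "\<dots> \<le> ((opnorm T + 1) * \<delta>) * (l2norm \<eta> + 1)"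
        using F0(2)[of F] F opnorm_nonneg[OF T] dp
        by (intro mult_mono) (auto intro: mult_mono)
      also have "\<dots> = \<epsilon> / 2" using pos by (simp add: \<delta>_def field_simps)
      also have "\<dots> < \<epsilon>" using eps by simp
      finally show "dist (sum f F) (l2inner (T \<xi>) \<eta>) < \<epsilon>" by (simp add: dist_norm norm_minus_commute)
    qed (use F0 in auto)
  qed
  have "infsum f UNIV = l2inner (T \<xi>) \<eta>"
    by (rule tendsto_unique[OF finite_subsets_at_top_neq_bot lim1 lim2])
  then show ?thesis using r by simp
qed

lemma op_adj_eq:
  assumes T: "T \<in> bdd_ops"
  shows "op_adj T = adjT T"
  unfolding op_adj_def
proof (rule the_equality)
  show "adjT T \<in> bdd_ops \<and> (\<forall>\<xi>\<in>ell2. \<forall>\<eta>\<in>ell2. l2inner (T \<xi>) \<eta> = l2inner \<xi> (adjT T \<eta>))"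
    using adjT_bo[OF T] adjT_ident[OF T] by blast
  fix S assume S: "S \<in> bdd_ops \<and> (\<forall>\<xi>\<in>ell2. \<forall>\<eta>\<in>ell2. l2inner (T \<xi>) \<eta> = l2inner \<xi> (S \<eta>))"
  show "S = adjT T"
  proof
    fix \<eta> :: "'a \<Rightarrow> complex"
    show "S \<eta> = adjT T \<eta>"
    proof (cases "\<eta> \<in> ell2")
      case False
      then show ?thesis using S bo_out[of S \<eta>] by (simp add: adjT_def)
    next
      case e: True
      show ?thesis
      proof
        fix j
        have "cnj (S \<eta> j) = l2inner (dlt j) (S \<eta>)" by simp
        also have "\<dots> = l2inner (T (dlt j)) \<eta>" using S e by simp
        also have "\<dots> = l2inner (dlt j) (adjT T \<eta>)" by (rule adjT_ident[OF T dlt_ell2 e])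
        also have "\<dots> = cnj (adjT T \<eta> j)" by simp
        finally show "S \<eta> j = adjT T \<eta> j" by simp
      qed
    qed
  qed
qed



definition upair :: "'g op \<Rightarrow> 'g op \<Rightarrow> bool" where
  "upair U V \<longleftrightarrow> (\<forall>\<xi>. U \<xi> \<in> ell2 \<longleftrightarrow> \<xi> \<in> ell2)
     \<and> (\<forall>\<xi> \<eta> a b. U (\<lambda>g. a * \<xi> g + b * \<eta> g) = (\<lambda>h. a * U \<xi> h + b * U \<eta> h))
     \<and> (\<forall>x y. x \<in> ell2 \<longrightarrow> y \<in> ell2 \<longrightarrow> l2inner (U x) y = l2inner x (V y))"

lemma upair_ell2: "upair U V \<Longrightarrow> U \<xi> \<in> ell2 \<longleftrightarrow> \<xi> \<in> ell2"
  by (simp add: upair_def)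

lemma upair_lin: "upair U V \<Longrightarrow> U (\<lambda>g. a * \<xi> g + b * \<eta> g) = (\<lambda>h. a * U \<xi> h + b * U \<eta> h)"
  by (simp add: upair_def)

lemma upair_inner: "upair U V \<Longrightarrow> x \<in> ell2 \<Longrightarrow> y \<in> ell2 \<Longrightarrow> l2inner (U x) y = l2inner x (V y)"
  by (simp add: upair_def)

lemma upair_zero: "upair U V \<Longrightarrow> U (\<lambda>_. 0) = (\<lambda>_. 0)"
  using upair_lin[of U V 0 "\<lambda>_. 0" 0 "\<lambda>_. 0"] by simp

lemma upair_add: "upair U V \<Longrightarrow> U (\<lambda>g. \<xi> g + \<eta> g) = (\<lambda>h. U \<xi> h + U \<eta> h)"
  using upair_lin[of U V 1 \<xi> 1 \<eta>] by simp

lemma upair_scale: "upair U V \<Longrightarrow> U (\<lambda>g. a * \<xi> g) = (\<lambda>h. a * U \<xi> h)"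
  using upair_lin[of U V a \<xi> 0 \<xi>] by simp

definition Comm :: "('g op \<times> 'g op) set \<Rightarrow> 'g op set" where
  "Comm W = {T \<in> bdd_ops. \<forall>(U,V)\<in>W. T \<circ> U = U \<circ> T}"

lemma CommD: "T \<in> Comm W \<Longrightarrow> (U,V) \<in> W \<Longrightarrow> T (U \<xi>) = U (T \<xi>)"
  unfolding Comm_def by (metis (mono_tags, lifting) case_prodD comp_apply mem_Collect_eq)

lemma CommI: "T \<in> bdd_ops \<Longrightarrow> (\<And>U V \<xi>. (U,V) \<in> W \<Longrightarrow> T (U \<xi>) = U (T \<xi>)) \<Longrightarrow> T \<in> Comm W"
  unfolding Comm_def by (auto simp: fun_eq_iff)

lemma Comm_bo: "T \<in> Comm W \<Longrightarrow> T \<in> bdd_ops"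
  by (simp add: Comm_def)

locale pairs =
  fixes W :: "('g op \<times> 'g op) set"
  assumes symW: "\<And>U V. (U,V) \<in> W \<Longrightarrow> (V,U) \<in> W"
    and upW: "\<And>U V. (U,V) \<in> W \<Longrightarrow> upair U V"
begin

lemma Comm_star: "star_subalg (Comm W)"
  unfolding star_subalg_def
proof (intro conjI ballI allI)
  show "Comm W \<subseteq> bdd_ops" by (auto simp: Comm_def)
next
  fix S T assume S: "S \<in> Comm W" and T: "T \<in> Comm W"
  show "op_add S T \<in> Comm W"
  proof (rule CommI)
    show "op_add S T \<in> bdd_ops" by (rule op_add_bo[OF Comm_bo[OF S] Comm_bo[OF T]])
    fix U V \<xi> assume UV: "(U,V) \<in> W"
    show "op_add S T (U \<xi>) = U (op_add S T \<xi>)"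
      unfolding op_add_def using CommD[OF S UV] CommD[OF T UV] upair_add[OF upW[OF UV]] by simp
  qed
  show "S \<circ> T \<in> Comm W"
  proof (rule CommI)
    show "S \<circ> T \<in> bdd_ops" by (rule comp_bo[OF Comm_bo[OF S] Comm_bo[OF T]])
    fix U V \<xi> assume UV: "(U,V) \<in> W"
    show "(S \<circ> T) (U \<xi>) = U ((S \<circ> T) \<xi>)" using CommD[OF S UV] CommD[OF T UV] by simp
  qed
next
  fix c and T assume T: "T \<in> Comm W"
  show "op_smult c T \<in> Comm W"
  proof (rule CommI)
    show "op_smult c T \<in> bdd_ops" by (rule op_smult_bo[OF Comm_bo[OF T]])
    fix U V \<xi> assume UV: "(U,V) \<in> W"
    show "op_smult c T (U \<xi>) = U (op_smult c T \<xi>)"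
      unfolding op_smult_def using CommD[OF T UV] upair_scale[OF upW[OF UV]] by simp
  qed
next
  fix T assume T: "T \<in> Comm W"
  have Tb: "T \<in> bdd_ops" by (rule Comm_bo[OF T])
  have A: "adjT T \<in> bdd_ops" by (rule adjT_bo[OF Tb])
  show "op_adj T \<in> Comm W" unfolding op_adj_eq[OF Tb]
  proof (rule CommI[OF A])
    fix U V \<eta> assume UV: "(U,V) \<in> W"
    have uU: "upair U V" by (rule upW[OF UV])
    have uV: "upair V U" by (rule upW[OF symW[OF UV]])
    show "adjT T (U \<eta>) = U (adjT T \<eta>)"
    proof (cases "\<eta> \<in> ell2")
      case False
      then have "U \<eta> \<notin> ell2" using upair_ell2[OF uU] by simp
      then show ?thesis using False bo_out[OF A] upair_zero[OF uU] by simp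
    next
      case e: True
      have Ue: "U \<eta> \<in> ell2" using e upair_ell2[OF uU] by simp
      have Ae: "adjT T \<eta> \<in> ell2" by (rule bo_ell2[OF A e])
      show ?thesis
      proof
        fix j
        have Vd: "V (dlt j) \<in> ell2" using upair_ell2[OF uV] by simp
        have "cnj (adjT T (U \<eta>) j) = l2inner (dlt j) (adjT T (U \<eta>))" by simp
        also have "\<dots> = l2inner (T (dlt j)) (U \<eta>)" by (rule adjT_ident[symmetric, OF Tb dlt_ell2 Ue])
        also have "\<dots> = l2inner (V (T (dlt j))) \<eta>" by (rule upair_inner[symmetric, OF uV bo_ell2[OF Tb dlt_ell2] e])
        also have "\<dots> = l2inner (T (V (dlt j))) \<eta>" using CommD[OF T symW[OF UV]] by simp
        also have "\<dots> = l2inner (V (dlt j)) (adjT T \<eta>)" by (rule adjT_ident[OF Tb Vd e])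
        also have "\<dots> = l2inner (dlt j) (U (adjT T \<eta>))" by (rule upair_inner[OF uV dlt_ell2 Ae])
        also have "\<dots> = cnj (U (adjT T \<eta>) j)" by simp
        finally show "adjT T (U \<eta>) j = U (adjT T \<eta>) j" by simp
      qed
    qed
  qed
qed

lemma Comm_wot: "wot_closed (Comm W)"
  unfolding wot_closed_def
proof (intro ballI impI)
  fix T :: "'g op" assume Tb: "T \<in> bdd_ops"
  assume ap: "\<forall>P \<epsilon>. finite P \<and> P \<subseteq> ell2 \<times> ell2 \<and> 0 < \<epsilon> \<longrightarrow>
      (\<exists>S\<in>Comm W. \<forall>(\<xi>, \<eta>)\<in>P. cmod (l2inner (T \<xi>) \<eta> - l2inner (S \<xi>) \<eta>) < \<epsilon>)"
  show "T \<in> Comm W"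
  proof (rule CommI[OF Tb])
    fix U V \<xi> assume UV: "(U,V) \<in> W"
    have uU: "upair U V" by (rule upW[OF UV])
    have uV: "upair V U" by (rule upW[OF symW[OF UV]])
    show "T (U \<xi>) = U (T \<xi>)"
    proof (cases "\<xi> \<in> ell2")
      case False
      then have "U \<xi> \<notin> ell2" using upair_ell2[OF uU] by simp
      then show ?thesis using False bo_out[OF Tb] upair_zero[OF uU] by simp
    next
      case x: True
      have Ux: "U \<xi> \<in> ell2" using x upair_ell2[OF uU] by simp
      show ?thesis
      proof
        fix j
        have Vd: "V (dlt j) \<in> ell2" using upair_ell2[OF uV] by simp
        define A where "A = l2inner (T (U \<xi>)) (dlt j)"
        define B where "B = l2inner (T \<xi>) (V (dlt j))"
        have "cmod (A - B) \<le> 0 + \<epsilon>" if eps: "\<epsilon> > 0" for \<epsilon>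
        proof -
          define Q where "Q = {(U \<xi>, dlt j), (\<xi>, V (dlt j))}"
          have Q: "finite Q \<and> Q \<subseteq> ell2 \<times> ell2 \<and> 0 < \<epsilon> / 2" using Ux x Vd eps by (auto simp: Q_def)
          obtain S where S: "S \<in> Comm W" and
            Sp: "\<forall>(a, b)\<in>Q. cmod (l2inner (T a) b - l2inner (S a) b) < \<epsilon> / 2"
            using ap Q by blast
          have Sb: "S \<in> bdd_ops" by (rule Comm_bo[OF S])
          have 1: "cmod (A - l2inner (S (U \<xi>)) (dlt j)) < \<epsilon> / 2" using Sp by (simp add: Q_def A_def)
          have 2: "cmod (B - l2inner (S \<xi>) (V (dlt j))) < \<epsilon> / 2" using Sp by (simp add: Q_def B_def)
          have 3: "l2inner (S (U \<xi>)) (dlt j) = l2inner (S \<xi>) (V (dlt j))"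
            using CommD[OF S UV] upair_inner[OF uU bo_ell2[OF Sb x] dlt_ell2] by simp
          have "cmod (A - B) \<le> cmod (A - l2inner (S (U \<xi>)) (dlt j)) + cmod (B - l2inner (S \<xi>) (V (dlt j)))"
            using 3 norm_triangle_ineq4[of "A - l2inner (S (U \<xi>)) (dlt j)" "B - l2inner (S \<xi>) (V (dlt j))"]
            by simp
          then show ?thesis using 1 2 by simp
        qed
        then have "cmod (A - B) \<le> 0" by (rule field_le_epsilon)
        then have AB: "A = B" by simp
        have "T (U \<xi>) j = A" by (simp add: A_def)
        also have "\<dots> = B" by (rule AB)
        also have "\<dots> = l2inner (U (T \<xi>)) (dlt j)" unfolding B_def by (rule upair_inner[symmetric, OF uU bo_ell2[OF Tb x] dlt_ell2])
        also have "\<dots> = U (T \<xi>) j" by simp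
        finally show "T (U \<xi>) j = U (T \<xi>) j" .
      qed
    qed
  qed
qed

end



definition rho :: "('g::group_add \<Rightarrow> 'g \<Rightarrow> complex) \<Rightarrow> 'g \<Rightarrow> 'g op" where
  "rho \<sigma> k = (\<lambda>\<xi> h. cnj (\<sigma> h k) * \<xi> (h + k))"

definition rhos :: "('g::group_add \<Rightarrow> 'g \<Rightarrow> complex) \<Rightarrow> 'g \<Rightarrow> 'g op" where
  "rhos \<sigma> k = (\<lambda>\<xi> h. \<sigma> (h + - k) k * \<xi> (h + - k))"

definition RW :: "('g::group_add \<Rightarrow> 'g \<Rightarrow> complex) \<Rightarrow> ('g op \<times> 'g op) set" where
  "RW \<sigma> = {(rho \<sigma> k, rhos \<sigma> k) | k. True} \<union> {(rhos \<sigma> k, rho \<sigma> k) | k. True}"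

lemma shiftr_ell2:
  fixes \<xi> :: "'g::group_add \<Rightarrow> complex"
  shows "((\<lambda>h. \<xi> (h + k)) \<in> ell2 \<longleftrightarrow> \<xi> \<in> ell2)"
  using reindex_ell2[of "\<lambda>h. h + k" "\<lambda>h. h + - k" \<xi>] by (simp add: add.assoc)

lemma rho_upair:
  assumes s: "cocycle \<sigma>"
  shows "upair (rho \<sigma> k) (rhos \<sigma> k)"
proof -
  have m: "\<And>a b. cmod (\<sigma> a b) = 1" using s by (simp add: cocycle_def)
  have e: "rho \<sigma> k \<xi> \<in> ell2 \<longleftrightarrow> \<xi> \<in> ell2" for \<xi>
  proof -
    have "rho \<sigma> k \<xi> \<in> ell2 \<longleftrightarrow> (\<lambda>h. \<xi> (h + k)) \<in> ell2"
      unfolding rho_def by (rule conjunct1[OF cmod_eq_ell2]) (simp add: norm_mult m)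
    then show ?thesis using shiftr_ell2[of \<xi> k] by simp
  qed
  have l: "rho \<sigma> k (\<lambda>g. a * \<xi> g + b * \<eta> g) = (\<lambda>h. a * rho \<sigma> k \<xi> h + b * rho \<sigma> k \<eta> h)" for a b \<xi> \<eta>
    by (simp add: rho_def fun_eq_iff algebra_simps)
  have i: "l2inner (rho \<sigma> k x) y = l2inner x (rhos \<sigma> k y)" for x y
    unfolding l2inner_def rho_def rhos_def
    by (rule infsum_reindex_bij_witness[of UNIV "\<lambda>b. b + - k" "\<lambda>a. a + k"]) (simp_all add: add.assoc)
  show ?thesis unfolding upair_def using e l i by blast
qed

lemma rhos_upair:
  assumes s: "cocycle \<sigma>"
  shows "upair (rhos \<sigma> k) (rho \<sigma> k)"
proof -
  have m: "\<And>a b. cmod (\<sigma> a b) = 1" using s by (simp add: cocycle_def)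
  have e: "rhos \<sigma> k \<xi> \<in> ell2 \<longleftrightarrow> \<xi> \<in> ell2" for \<xi>
  proof -
    have "rhos \<sigma> k \<xi> \<in> ell2 \<longleftrightarrow> (\<lambda>h. \<xi> (h + - k)) \<in> ell2"
      unfolding rhos_def by (rule conjunct1[OF cmod_eq_ell2]) (simp add: norm_mult m)
    then show ?thesis using shiftr_ell2[of \<xi> "- k"] by simp
  qed
  have l: "rhos \<sigma> k (\<lambda>g. a * \<xi> g + b * \<eta> g) = (\<lambda>h. a * rhos \<sigma> k \<xi> h + b * rhos \<sigma> k \<eta> h)" for a b \<xi> \<eta>
    by (simp add: rhos_def fun_eq_iff algebra_simps)
  have i: "l2inner (rhos \<sigma> k x) y = l2inner x (rho \<sigma> k y)" for x y
    unfolding l2inner_def rho_def rhos_def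
    by (rule infsum_reindex_bij_witness[of UNIV "\<lambda>b. b + k" "\<lambda>a. a + - k"]) (simp_all add: add.assoc)
  show ?thesis unfolding upair_def using e l i by blast
qed

lemma RW_pairs: "cocycle \<sigma> \<Longrightarrow> pairs (RW \<sigma>)"
  unfolding pairs_def RW_def using rho_upair rhos_upair by blast

lemma cocycle_eq: "cocycle \<sigma> \<Longrightarrow> \<sigma> g b * \<sigma> (g + b) c = \<sigma> b c * \<sigma> g (b + c)"
  by (simp add: cocycle_def)

lemma Lam_rho:
  assumes s: "cocycle \<sigma>"
  shows "Lam \<sigma> g (rho \<sigma> k \<xi>) = rho \<sigma> k (Lam \<sigma> g \<xi>)"
proof (cases "\<xi> \<in> ell2")
  case False
  then have "rho \<sigma> k \<xi> \<notin> ell2" using upair_ell2[OF rho_upair[OF s]] by simp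
  then show ?thesis using False by (simp add: Lam_def rho_def)
next
  case x: True
  then have rx: "rho \<sigma> k \<xi> \<in> ell2" using upair_ell2[OF rho_upair[OF s]] by simp
  show ?thesis
  proof
    fix h
    define b where "b = - g + h"
    define x1 where "x1 = \<sigma> g b"
    define c1 where "c1 = \<sigma> b k"
    define c2 where "c2 = \<sigma> h k"
    define y where "y = \<sigma> g (b + k)"
    have E: "x1 * c2 = c1 * y"
      using cocycle_eq[OF s, of g b k] by (simp add: x1_def c1_def c2_def y_def b_def add.assoc[symmetric])
    have u1: "c1 * cnj c1 = 1" using s by (simp add: c1_def cocycle_def complex_norm_square[symmetric])
    have u2: "c2 * cnj c2 = 1" using s by (simp add: c2_def cocycle_def complex_norm_square[symmetric])
    have key: "x1 * cnj c1 = cnj c2 * y"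
    proof -
      have "x1 * cnj c1 = x1 * cnj c1 * (c2 * cnj c2)" using u2 by simp
      also have "\<dots> = (x1 * c2) * cnj c1 * cnj c2" by (simp add: mult_ac)
      also have "\<dots> = (c1 * y) * cnj c1 * cnj c2" using E by simp
      also have "\<dots> = y * cnj c2 * (c1 * cnj c1)" by (simp add: mult_ac)
      also have "\<dots> = cnj c2 * y" using u1 by (simp add: mult_ac)
      finally show ?thesis .
    qed
    have "Lam \<sigma> g (rho \<sigma> k \<xi>) h = x1 * cnj c1 * \<xi> (b + k)"
      using rx by (simp add: Lam_in rho_def x1_def c1_def b_def)
    also have "\<dots> = cnj c2 * y * \<xi> (b + k)" using key by simp
    also have "\<dots> = rho \<sigma> k (Lam \<sigma> g \<xi>) h"
      using x by (simp add: Lam_in rho_def c2_def y_def b_def add.assoc)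
    finally show "Lam \<sigma> g (rho \<sigma> k \<xi>) h = rho \<sigma> k (Lam \<sigma> g \<xi>) h" .
  qed
qed

lemma Lam_rhos:
  assumes s: "cocycle \<sigma>"
  shows "Lam \<sigma> g (rhos \<sigma> k \<xi>) = rhos \<sigma> k (Lam \<sigma> g \<xi>)"
proof (cases "\<xi> \<in> ell2")
  case False
  then have "rhos \<sigma> k \<xi> \<notin> ell2" using upair_ell2[OF rhos_upair[OF s]] by simp
  then show ?thesis using False by (simp add: Lam_def rhos_def)
next
  case x: True
  then have rx: "rhos \<sigma> k \<xi> \<in> ell2" using upair_ell2[OF rhos_upair[OF s]] by simp
  show ?thesis
  proof
    fix h
    define b where "b = - g + h + - k"
    have gb: "g + b = h + - k" by (simp only: b_def add.assoc[symmetric] add.right_inverse add_0_left)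
    have bk: "b + k = - g + h" by (simp add: b_def)
    have E: "\<sigma> g b * \<sigma> (h + - k) k = \<sigma> b k * \<sigma> g (- g + h)"
      using cocycle_eq[OF s, of g b k] unfolding gb bk .
    have "Lam \<sigma> g (rhos \<sigma> k \<xi>) h = \<sigma> g (- g + h) * \<sigma> b k * \<xi> b"
      using rx by (simp add: Lam_in rhos_def b_def add.assoc)
    also have "\<dots> = \<sigma> (h + - k) k * \<sigma> g b * \<xi> b" using E by (simp add: mult_ac)
    also have "\<dots> = rhos \<sigma> k (Lam \<sigma> g \<xi>) h"
      using x by (simp add: Lam_in rhos_def b_def add_diff_eq)
    finally show "Lam \<sigma> g (rhos \<sigma> k \<xi>) h = rhos \<sigma> k (Lam \<sigma> g \<xi>) h" .
  qed
qed

lemma Lam_Comm: "cocycle \<sigma> \<Longrightarrow> Lam \<sigma> g \<in> Comm (RW \<sigma>)"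
  by (rule CommI[OF Lam_bo]) (auto simp: RW_def Lam_rho Lam_rhos)

lemma vN_Comm:
  assumes s: "cocycle \<sigma>"
  shows "vN \<sigma> \<subseteq> Comm (RW \<sigma>)"
proof -
  interpret pairs "RW \<sigma>" by (rule RW_pairs[OF s])
  have "Comm (RW \<sigma>) \<in> {A. star_subalg A \<and> wot_closed A \<and> range (Lam \<sigma>) \<subseteq> A}"
    using Comm_star Comm_wot Lam_Comm[OF s] by auto
  then show ?thesis unfolding vN_def by (rule Inter_lower)
qed

lemma add_neg_eq0_iff: "(h + - j = (0::'g::group_add)) \<longleftrightarrow> h = j"
proof
  assume a: "h + - j = 0"
  have "h = (h + - j) + j" by (simp add: add.assoc)
  with a show "h = j" by simp
qed simp

lemma rho_delta:
  "rho \<sigma> (- j) delta_e = (\<lambda>h. cnj (\<sigma> j (- j)) * dlt j h)"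
  by (auto simp: rho_def delta_e_def dlt_def fun_eq_iff add_neg_eq0_iff)

lemma bo_eq_dlt:
  assumes S: "S \<in> bdd_ops" and T: "T \<in> bdd_ops" and eq: "\<And>j. S (dlt j) = T (dlt j)"
  shows "S = T"
proof
  fix \<zeta> :: "'a \<Rightarrow> complex"
  show "S \<zeta> = T \<zeta>"
  proof (cases "\<zeta> \<in> ell2")
    case False
    then show ?thesis using bo_out[OF S] bo_out[OF T] by simp
  next
    case z: True
    have d: "(\<lambda>h. S \<zeta> h - T \<zeta> h) \<in> ell2" by (rule ell2_diff[OF bo_ell2[OF S z] bo_ell2[OF T z]])
    have "l2norm (\<lambda>h. S \<zeta> h - T \<zeta> h) \<le> 0 + \<epsilon>" if eps: "\<epsilon> > 0" for \<epsilon>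
    proof -
      define K where "K = opnorm S + opnorm T + 1"
      have K: "K > 0" using opnorm_nonneg[OF S] opnorm_nonneg[OF T] by (simp add: K_def add_nonneg_pos)
      obtain F0 where F0: "finite F0" "\<And>F. F0 \<subseteq> F \<Longrightarrow> l2norm (\<lambda>g. \<zeta> g - trunc F0 \<zeta> g) \<le> \<epsilon> / K"
        using trunc_approx[OF z, of "\<epsilon> / K"] eps K by auto
      define t where "t = trunc F0 \<zeta>"
      have t: "t \<in> ell2" unfolding t_def by (rule trunc_ell2[OF z])
      have r: "(\<lambda>g. \<zeta> g - t g) \<in> ell2" by (rule ell2_diff[OF z t])
      have rn: "l2norm (\<lambda>g. \<zeta> g - t g) \<le> \<epsilon> / K" using F0(2)[OF order_refl] by (simp add: t_def)
      have St: "S t = T t"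
        unfolding t_def trunc_finite_sum[OF F0(1)] by (simp add: bo_finsum[OF S F0(1)] bo_finsum[OF T F0(1)] eq)
      have "(\<lambda>h. S \<zeta> h - T \<zeta> h) = (\<lambda>h. S (\<lambda>g. \<zeta> g - t g) h - T (\<lambda>g. \<zeta> g - t g) h)"
        using St by (simp add: bo_diff[OF S z t] bo_diff[OF T z t])
      then have "l2norm (\<lambda>h. S \<zeta> h - T \<zeta> h) \<le> l2norm (S (\<lambda>g. \<zeta> g - t g)) + l2norm (T (\<lambda>g. \<zeta> g - t g))"
        using l2norm_diff[OF bo_ell2[OF S r] bo_ell2[OF T r]] by simp
      also have "\<dots> \<le> opnorm S * l2norm (\<lambda>g. \<zeta> g - t g) + opnorm T * l2norm (\<lambda>g. \<zeta> g - t g)"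
        using opnorm_bound[OF S r] opnorm_bound[OF T r] by simp
      also have "\<dots> \<le> K * l2norm (\<lambda>g. \<zeta> g - t g)" by (simp add: K_def algebra_simps)
      also have "\<dots> \<le> K * (\<epsilon> / K)" using rn K by (intro mult_left_mono) auto
      also have "\<dots> = \<epsilon>" using K by simp
      finally show ?thesis by simp
    qed
    then have "l2norm (\<lambda>h. S \<zeta> h - T \<zeta> h) \<le> 0" by (rule field_le_epsilon)
    then have "(\<lambda>h. S \<zeta> h - T \<zeta> h) = (\<lambda>_. 0)" by (rule l2norm_le0[OF d])
    then show ?thesis by (simp add: fun_eq_iff)
  qed
qed

lemma vN_hat_unique:
  assumes s: "cocycle \<sigma>" and x: "x \<in> vN \<sigma>" and T: "T \<in> vN \<sigma>" and h: "hat x = hat T"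
  shows "x = T"
proof -
  have xC: "x \<in> Comm (RW \<sigma>)" and TC: "T \<in> Comm (RW \<sigma>)" using vN_Comm[OF s] x T by auto
  have xb: "x \<in> bdd_ops" and Tb: "T \<in> bdd_ops" using Comm_bo xC TC by auto
  show ?thesis
  proof (rule bo_eq_dlt[OF xb Tb])
    fix j :: 'a
    define c where "c = cnj (\<sigma> j (- j))"
    have "cmod (\<sigma> j (- j)) = 1" using s by (simp add: cocycle_def)
    then have c: "c \<noteq> 0" by (auto simp: c_def)
    have UV: "(rho \<sigma> (- j), rhos \<sigma> (- j)) \<in> RW \<sigma>" by (auto simp: RW_def)
    have "x (rho \<sigma> (- j) delta_e) = T (rho \<sigma> (- j) delta_e)"
      using CommD[OF xC UV] CommD[OF TC UV] h by (simp add: hat_def)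
    then have "(\<lambda>h. c * x (dlt j) h) = (\<lambda>h. c * T (dlt j) h)"
      unfolding rho_delta c_def[symmetric] by (simp add: bo_scale[OF xb dlt_ell2] bo_scale[OF Tb dlt_ell2])
    then show "x (dlt j) = T (dlt j)" using c by (simp add: fun_eq_iff)
  qed
qed

theorem proposition3p7:
  fixes \<kappa> :: "'g::group_add \<Rightarrow> real"
  assumes "\<forall>g. \<kappa> g \<ge> 1"
  shows "(decay_prop triv (L2k \<kappa>) (norm2k \<kappa>) \<longleftrightarrow> pi_bounded triv (norm2k \<kappa>))
    \<and> (kappa_decaying (triv :: 'g \<Rightarrow> 'g \<Rightarrow> complex) \<kappa> \<longrightarrow>
        (\<forall>\<sigma>. cocycle \<sigma> \<longrightarrow>
            kappa_decaying \<sigma> \<kappa>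
          \<and> (\<forall>\<xi>\<in>L2k \<kappa>. \<exists>T\<in>bdd_ops. op_net_conv (psum \<sigma> \<xi>) T)
          \<and> {x \<in> vN \<sigma>. hat x \<in> L2k \<kappa>} = tpi \<sigma> ` L2k \<kappa>
          \<and> tpi \<sigma> ` L2k \<kappa> \<subseteq> CF \<sigma>))"
proof -
  have k: "\<forall>g. \<kappa> g \<ge> 1" by (rule assms)
  have di: "\<forall>\<xi>\<in>L2k \<kappa>. \<forall>\<epsilon>>0. \<exists>F0. finite F0 \<and> (\<forall>F. finite F \<and> F \<inter> F0 = {} \<longrightarrow> norm2k \<kappa> (chiF F \<xi>) < \<epsilon>)"
    using decay_i by blast
  have part1: "decay_prop triv (L2k \<kappa>) (norm2k \<kappa>) \<longleftrightarrow> pi_bounded triv (norm2k \<kappa>)"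
    unfolding decay_prop_def using di by blast
  have part2: "kappa_decaying \<sigma> \<kappa>
          \<and> (\<forall>\<xi>\<in>L2k \<kappa>. \<exists>T\<in>bdd_ops. op_net_conv (psum \<sigma> \<xi>) T)
          \<and> {x \<in> vN \<sigma>. hat x \<in> L2k \<kappa>} = tpi \<sigma> ` L2k \<kappa>
          \<and> tpi \<sigma> ` L2k \<kappa> \<subseteq> CF \<sigma>"
    if kd: "kappa_decaying (triv :: 'g \<Rightarrow> 'g \<Rightarrow> complex) \<kappa>" and s: "cocycle \<sigma>" for \<sigma>
  proof -
    have pbt: "pi_bounded (triv :: 'g \<Rightarrow> 'g \<Rightarrow> complex) (norm2k \<kappa>)"
      using kd by (simp add: kappa_decaying_def decay_prop_def)
    have pb: "pi_bounded \<sigma> (norm2k \<kappa>)" by (rule pi_bounded_transfer[OF s pbt])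
    then obtain C where C: "\<And>f. f \<in> Kfin \<Longrightarrow> opnorm (piS \<sigma> f) \<le> C * norm2k \<kappa> f"
      by (auto simp: pi_bounded_def)
    define C' where "C' = \<bar>C\<bar> + 1"
    have C'p: "C' > 0" by (simp add: C'_def add_nonneg_pos)
    have C'b: "opnorm (piS \<sigma> f) \<le> C' * norm2k \<kappa> f" if "f \<in> Kfin" for f
    proof -
      have "C * norm2k \<kappa> f \<le> C' * norm2k \<kappa> f"
        by (intro mult_right_mono) (auto simp: C'_def norm2k_def)
      then show ?thesis using C[OF that] by linarith
    qed
    have cs: "convsetup \<sigma> \<xi> (norm2k \<kappa>) C'" if xi: "\<xi> \<in> L2k \<kappa>" for \<xi>
      unfolding convsetup_def using s L2k_ell2[OF k xi] di xi C'p C'b by blast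
    have tp: "tpi \<sigma> \<xi> = Tlim \<sigma> \<xi>" if xi: "\<xi> \<in> L2k \<kappa>" for \<xi>
      using convsetup.tpi_eq[OF cs[OF xi]] .
    have Tb: "Tlim \<sigma> \<xi> \<in> bdd_ops" if xi: "\<xi> \<in> L2k \<kappa>" for \<xi>
      using convsetup.Tlim_bo[OF cs[OF xi]] .
    have Tn: "op_net_conv (psum \<sigma> \<xi>) (Tlim \<sigma> \<xi>)" if xi: "\<xi> \<in> L2k \<kappa>" for \<xi>
      using convsetup.Tlim_net[OF cs[OF xi]] .
    have TCv: "Tlim \<sigma> \<xi> \<in> Cr \<sigma> \<and> Tlim \<sigma> \<xi> \<in> vN \<sigma>" if xi: "\<xi> \<in> L2k \<kappa>" for \<xi>
      by (rule Tlim_Cr_vN[OF s Tb[OF xi] Tn[OF xi]])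
    have ht: "hat (Tlim \<sigma> \<xi>) = \<xi>" for \<xi> by (rule hat_Tlim[OF s])
    have a1: "kappa_decaying \<sigma> \<kappa>" unfolding kappa_decaying_def decay_prop_def using di pb by blast
    have a2: "\<forall>\<xi>\<in>L2k \<kappa>. \<exists>T\<in>bdd_ops. op_net_conv (psum \<sigma> \<xi>) T" using Tb Tn by blast
    have a3: "{x \<in> vN \<sigma>. hat x \<in> L2k \<kappa>} = tpi \<sigma> ` L2k \<kappa>"
    proof
      show "{x \<in> vN \<sigma>. hat x \<in> L2k \<kappa>} \<subseteq> tpi \<sigma> ` L2k \<kappa>"
      proof
        fix x assume "x \<in> {x \<in> vN \<sigma>. hat x \<in> L2k \<kappa>}"
        then have x: "x \<in> vN \<sigma>" and hx: "hat x \<in> L2k \<kappa>" by auto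
        have "x = Tlim \<sigma> (hat x)"
          by (rule vN_hat_unique[OF s x conjunct2[OF TCv[OF hx]]]) (simp add: ht)
        then show "x \<in> tpi \<sigma> ` L2k \<kappa>" using tp[OF hx] hx by (metis image_eqI)
      qed
      show "tpi \<sigma> ` L2k \<kappa> \<subseteq> {x \<in> vN \<sigma>. hat x \<in> L2k \<kappa>}"
        using tp TCv ht by auto
    qed
    have a4: "tpi \<sigma> ` L2k \<kappa> \<subseteq> CF \<sigma>"
    proof
      fix y assume "y \<in> tpi \<sigma> ` L2k \<kappa>"
      then obtain \<xi> where xi: "\<xi> \<in> L2k \<kappa>" and y: "y = Tlim \<sigma> \<xi>" using tp by auto
      show "y \<in> CF \<sigma>" unfolding CF_def y using TCv[OF xi] Tb[OF xi] Tn[OF xi] ht[of \<xi>] by auto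
    qed
    show ?thesis using a1 a2 a3 a4 by blast
  qed
  show ?thesis using part1 part2 by blast
qed


end
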